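(* Let $k\ge 2$ be a fixed integer. For $n\ge 1$, let $Y_n$ be the random variable counting the indices $i$ with $1\le i\le n-k+1$ such that $p_i<p_{i+1}<\cdots<p_{i+k-1}$, where $p=p_1\cdots p_n$ is a permutation chosen uniformly at random among all permutations of length $n$. Then \[\frac{Y_n-E(Y_n)}{\sqrt{\operatorname{Var}(Y_n)}}\] converges in distribution to the standard normal distribution $N(0,1)$ as $n\to\infty$.
   Context: Each permutation of length $n$ is selected with probability $1/n!$. $Y_n$ is the number of "tight" (consecutive-position) copies of the monotone pattern $12\cdots k$. *)

theory Defs
  imports "HOL-Probability.Probability" "HOL-Combinatorics.Permutations"
begin

definition unif_perm :: "nat \<Rightarrow> (nat \<Rightarrow> nat) pmf" where
  "unif_perm n = pmf_of_set {p. p permutes {1..n}}"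

definition tight_incr_count :: "nat \<Rightarrow> nat \<Rightarrow> (nat \<Rightarrow> nat) \<Rightarrow> nat" where
  "tight_incr_count k n p =
     card {i. 1 \<le> i \<and> i + k - 1 \<le> n \<and> (\<forall>j. i \<le> j \<and> j < i + k - 1 \<longrightarrow> p j < p (Suc j))}"

definition Y :: "nat \<Rightarrow> nat \<Rightarrow> (nat \<Rightarrow> nat) \<Rightarrow> real" where
  "Y k n p = real (tight_incr_count k n p)"

end

theory Submission
  imports Defs
begin


definition U :: "real measure" where "U = uniform_measure lborel {0..1}"
definition Pm :: "(nat \<Rightarrow> real) measure" where "Pm = PiM UNIV (\<lambda>_. U)"

lemma prob_space_U: "prob_space U"
  unfolding U_def by (rule prob_space_uniform_measure) auto

lemma sets_U[simp, measurable_cong]: "sets U = sets borel"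
  unfolding U_def by simp

lemma space_U[simp]: "space U = UNIV"
  unfolding U_def by simp

lemma emeasure_U_sing: "emeasure U {x} = 0"
  unfolding U_def by (cases "x \<in> {0..1}") auto

lemma prob_space_Pm: "prob_space Pm"
  unfolding Pm_def by (intro prob_space_PiM prob_space_U)

interpretation P: prob_space Pm by (rule prob_space_Pm)

lemma space_Pm: "space Pm = UNIV"
  unfolding Pm_def by (simp add: space_PiM)

lemma distr_Pm_reindex:
  assumes "inj f"
  shows "distr Pm Pm (\<lambda>\<omega>. \<lambda>i. \<omega> (f i)) = Pm"
  using distr_PiM_reindex[of UNIV "\<lambda>_. U" f UNIV] assms prob_space_U
  unfolding Pm_def by (simp add: restrict_UNIV)

lemma measurable_coord[measurable]: "(\<lambda>\<omega>. \<omega> i) \<in> Pm \<rightarrow>\<^sub>M borel"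
  unfolding Pm_def
  by (metis measurable_cong_sets measurable_component_singleton sets_U UNIV_I)

lemma indep_coords: "P.indep_vars (\<lambda>_. U) (\<lambda>i \<omega>. \<omega> i) UNIV"
proof -
  have rv: "P.random_variable U (\<lambda>\<omega>. \<omega> i)" for i
    unfolding Pm_def by (rule measurable_component_singleton) auto
  have "distr Pm (PiM UNIV (\<lambda>_. U)) (\<lambda>x. \<lambda>i\<in>UNIV. x i) = PiM UNIV (\<lambda>i. distr Pm U (\<lambda>\<omega>. \<omega> i))"
  proof -
    have "distr Pm (PiM UNIV (\<lambda>_. U)) (\<lambda>x. \<lambda>i\<in>UNIV. x i) = Pm"
      unfolding Pm_def restrict_UNIV by (simp add: distr_id2)
    moreover have "\<And>i. distr Pm U (\<lambda>\<omega>. \<omega> i) = U"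
      unfolding Pm_def using distr_PiM_component[of UNIV "\<lambda>_. U"] prob_space_U by simp
    ultimately show ?thesis unfolding Pm_def by simp
  qed
  then show ?thesis
    by (subst P.indep_vars_iff_distr_eq_PiM) (auto simp: rv)
qed




lemma ties_null:
  assumes "i \<noteq> j"
  shows "emeasure Pm {\<omega>. \<omega> i = \<omega> j} = 0"
proof -
  define Q where "Q = PiM (UNIV - {i}) (\<lambda>_. U)"
  interpret U: prob_space U by (rule prob_space_U)
  interpret Q: prob_space Q unfolding Q_def by (intro prob_space_PiM prob_space_U)
  interpret UQ: pair_prob_space U Q ..
  have ins: "insert i (UNIV - {i}) = UNIV" by auto
  have eq: "distr (U \<Otimes>\<^sub>M Q) Pm (\<lambda>(x, X). X(i := x)) = Pm"
    using distr_pair_PiM_eq_PiM[of "UNIV - {i}" "\<lambda>_. U" i] prob_space_U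
    unfolding Pm_def Q_def ins by simp
  have fe: "(\<lambda>(x, X). X(i := x)) = (\<lambda>p. (snd p)(i := fst p))" by auto
  have meas: "(\<lambda>(x, X). X(i := x)) \<in> U \<Otimes>\<^sub>M Q \<rightarrow>\<^sub>M Pm"
    unfolding fe Pm_def
    by (rule measurable_fun_upd[where J="UNIV-{i}"]) (auto simp: Q_def)
  have jm: "(\<lambda>X. X j) \<in> Q \<rightarrow>\<^sub>M borel"
    unfolding Q_def using assms
    by (metis measurable_cong_sets measurable_component_singleton sets_U Diff_iff UNIV_I singletonD)
  have setm: "{p \<in> space (U \<Otimes>\<^sub>M Q). fst p = snd p j} \<in> sets (U \<Otimes>\<^sub>M Q)"
    using jm by measurable
  have "emeasure Pm {\<omega>. \<omega> i = \<omega> j} = emeasure (distr (U \<Otimes>\<^sub>M Q) Pm (\<lambda>(x, X). X(i := x))) {\<omega>. \<omega> i = \<omega> j}"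
    using eq by simp
  also have "\<dots> = emeasure (U \<Otimes>\<^sub>M Q) ((\<lambda>(x, X). X(i := x)) -` {\<omega>. \<omega> i = \<omega> j} \<inter> space (U \<Otimes>\<^sub>M Q))"
  proof (rule emeasure_distr[OF meas])
    have "{\<omega>\<in>space Pm. \<omega> i = \<omega> j} \<in> sets Pm" by measurable
    then show "{\<omega>. \<omega> i = \<omega> j} \<in> sets Pm" by (simp add: space_Pm)
  qed
  also have "(\<lambda>(x, X). X(i := x)) -` {\<omega>. \<omega> i = \<omega> j} \<inter> space (U \<Otimes>\<^sub>M Q) = {p \<in> space (U \<Otimes>\<^sub>M Q). fst p = snd p j}"
    using assms by auto
  also have "emeasure (U \<Otimes>\<^sub>M Q) \<dots> = (\<integral>\<^sup>+y. emeasure U ((\<lambda>x. (x, y)) -` {p \<in> space (U \<Otimes>\<^sub>M Q). fst p = snd p j}) \<partial>Q)"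
    by (rule UQ.emeasure_pair_measure_alt2[OF setm])
  also have "\<dots> = (\<integral>\<^sup>+y. 0 \<partial>Q)"
  proof (rule nn_integral_cong)
    fix y assume y: "y \<in> space Q"
    have "(\<lambda>x. (x, y)) -` {p \<in> space (U \<Otimes>\<^sub>M Q). fst p = snd p j} = {y j}"
      using y by (auto simp: space_pair_measure)
    then show "emeasure U ((\<lambda>x. (x, y)) -` {p \<in> space (U \<Otimes>\<^sub>M Q). fst p = snd p j}) = 0"
      by (simp add: emeasure_U_sing)
  qed
  finally show ?thesis by simp
qed




definition rk :: "nat \<Rightarrow> (nat \<Rightarrow> real) \<Rightarrow> nat \<Rightarrow> nat" where
  "rk n \<omega> i = (if i \<in> {1..n} then Suc (card {j\<in>{1..n}. \<omega> j < \<omega> i}) else i)"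

lemma rk_less_iff:
  assumes "i \<in> {1..n}" "j \<in> {1..n}"
  shows "rk n \<omega> i < rk n \<omega> j \<longleftrightarrow> \<omega> i < \<omega> j"
proof
  assume "\<omega> i < \<omega> j"
  then have "{l\<in>{1..n}. \<omega> l < \<omega> i} \<subset> {l\<in>{1..n}. \<omega> l < \<omega> j}"
    using assms by auto
  then have "card {l\<in>{1..n}. \<omega> l < \<omega> i} < card {l\<in>{1..n}. \<omega> l < \<omega> j}"
    by (intro psubset_card_mono) auto
  then show "rk n \<omega> i < rk n \<omega> j" using assms by (simp add: rk_def)
next
  assume "rk n \<omega> i < rk n \<omega> j"
  show "\<omega> i < \<omega> j"
  proof (rule ccontr)
    assume "\<not> \<omega> i < \<omega> j"
    then have "{l\<in>{1..n}. \<omega> l < \<omega> j} \<subseteq> {l\<in>{1..n}. \<omega> l < \<omega> i}" by auto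
    then have "card {l\<in>{1..n}. \<omega> l < \<omega> j} \<le> card {l\<in>{1..n}. \<omega> l < \<omega> i}"
      by (intro card_mono) auto
    with \<open>rk n \<omega> i < rk n \<omega> j\<close> show False using assms by (simp add: rk_def)
  qed
qed

lemma rk_permutes:
  assumes "inj_on \<omega> {1..n}"
  shows "rk n \<omega> permutes {1..n}"
proof (rule bij_imp_permutes)
  have inj: "inj_on (rk n \<omega>) {1..n}"
  proof (rule inj_onI)
    fix i j assume ij: "i \<in> {1..n}" "j \<in> {1..n}" "rk n \<omega> i = rk n \<omega> j"
    show "i = j"
    proof (rule ccontr)
      assume "i \<noteq> j"
      then have "\<omega> i \<noteq> \<omega> j" using assms ij by (auto dest: inj_onD)
      then have "\<omega> i < \<omega> j \<or> \<omega> j < \<omega> i" by auto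
      then show False using rk_less_iff[of i n j \<omega>] rk_less_iff[of j n i \<omega>] ij by auto
    qed
  qed
  have into: "rk n \<omega> ` {1..n} \<subseteq> {1..n}"
  proof
    fix x assume "x \<in> rk n \<omega> ` {1..n}"
    then obtain i where i: "i \<in> {1..n}" "x = rk n \<omega> i" by auto
    have "{j\<in>{1..n}. \<omega> j < \<omega> i} \<subseteq> {1..n} - {i}" by auto
    then have "card {j\<in>{1..n}. \<omega> j < \<omega> i} \<le> card ({1..n} - {i})" by (intro card_mono) auto
    also have "\<dots> = n - 1" using i by simp
    finally show "x \<in> {1..n}" using i by (simp add: rk_def; linarith)
  qed
  have "rk n \<omega> ` {1..n} = {1..n}"
    using into inj by (meson card_image card_subset_eq finite_atLeastAtMost)
  then show "bij_betw (rk n \<omega>) {1..n} {1..n}" using inj by (simp add: bij_betw_def)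
  show "\<And>x. x \<notin> {1..n} \<Longrightarrow> rk n \<omega> x = x" by (auto simp: rk_def)
qed

lemma rk_comp:
  assumes "\<tau> permutes {1..n}"
  shows "rk n (\<lambda>i. \<omega> (\<tau> i)) = rk n \<omega> \<circ> \<tau>"
proof
  fix i
  show "rk n (\<lambda>i. \<omega> (\<tau> i)) i = (rk n \<omega> \<circ> \<tau>) i"
  proof (cases "i \<in> {1..n}")
    case True
    then have ti: "\<tau> i \<in> {1..n}" using assms by (metis permutes_in_image)
    have "bij_betw \<tau> {j\<in>{1..n}. \<omega> (\<tau> j) < \<omega> (\<tau> i)} {j\<in>{1..n}. \<omega> j < \<omega> (\<tau> i)}"
    proof -
      have b: "bij_betw \<tau> {1..n} {1..n}" using assms by (rule permutes_imp_bij)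
      have "\<tau> ` {j\<in>{1..n}. \<omega> (\<tau> j) < \<omega> (\<tau> i)} = {j\<in>{1..n}. \<omega> j < \<omega> (\<tau> i)}"
      proof (intro equalityI subsetI)
        fix l assume "l \<in> \<tau> ` {j\<in>{1..n}. \<omega> (\<tau> j) < \<omega> (\<tau> i)}"
        then obtain j where "j \<in> {1..n}" "\<omega> (\<tau> j) < \<omega> (\<tau> i)" "l = \<tau> j" by auto
        then show "l \<in> {j\<in>{1..n}. \<omega> j < \<omega> (\<tau> i)}" using assms by (metis (mono_tags, lifting) mem_Collect_eq permutes_in_image)
      next
        fix l assume l: "l \<in> {j\<in>{1..n}. \<omega> j < \<omega> (\<tau> i)}"
        have inv1: "inv \<tau> l \<in> {1..n}" using l permutes_in_image[OF permutes_inv[OF assms]] by blast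
        have inv2: "\<tau> (inv \<tau> l) = l" using permutes_inverses(1)[OF assms] by blast
        show "l \<in> \<tau> ` {j\<in>{1..n}. \<omega> (\<tau> j) < \<omega> (\<tau> i)}"
          using inv1 inv2 l by (intro image_eqI[of _ _ "inv \<tau> l"]) auto
      qed
      then show ?thesis using b by (auto simp: bij_betw_def intro: inj_on_subset)
    qed
    then have "card {j\<in>{1..n}. \<omega> (\<tau> j) < \<omega> (\<tau> i)} = card {j\<in>{1..n}. \<omega> j < \<omega> (\<tau> i)}"
      by (rule bij_betw_same_card)
    then show ?thesis using True ti by (simp add: rk_def)
  next
    case False
    then have "\<tau> i = i" using assms by (simp add: permutes_not_in)
    then show ?thesis using False by (auto simp: rk_def)
  qed
qed

lemma pred_card_eq:
  assumes [measurable]: "\<And>j. j \<in> S \<Longrightarrow> Measurable.pred M (P j)" and fin: "finite S"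
  shows "Measurable.pred M (\<lambda>x. card {j\<in>S. P j x} = c)"
proof -
  have eq: "(\<lambda>x. card {j\<in>S. P j x} = c) = (\<lambda>x. \<exists>A\<in>Pow S. card A = c \<and> (\<forall>j\<in>S. if j \<in> A then P j x else \<not> P j x))"
  proof (intro ext iffI)
    fix x assume "card {j\<in>S. P j x} = c"
    then show "\<exists>A\<in>Pow S. card A = c \<and> (\<forall>j\<in>S. if j \<in> A then P j x else \<not> P j x)"
      by (intro bexI[of _ "{j\<in>S. P j x}"]) auto
  next
    fix x assume "\<exists>A\<in>Pow S. card A = c \<and> (\<forall>j\<in>S. if j \<in> A then P j x else \<not> P j x)"
    then obtain A where "A \<subseteq> S" "card A = c" "\<forall>j\<in>S. if j \<in> A then P j x else \<not> P j x" by auto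
    moreover then have "A = {j\<in>S. P j x}" by (auto split: if_splits)
    ultimately show "card {j\<in>S. P j x} = c" by simp
  qed
  show ?thesis unfolding eq using fin by (intro pred_intros_finite pred_intros_logic measurable_If) (auto simp: pred_def)
qed

lemma sets_rk_eq: "{\<omega>. rk n \<omega> = \<sigma>} \<in> sets Pm"
proof -
  have pw: "\<And>\<omega> i. rk n \<omega> i = \<sigma> i \<longleftrightarrow> (if i \<in> {1..n} then 1 \<le> \<sigma> i \<and> card {j\<in>{1..n}. \<omega> j < \<omega> i} = \<sigma> i - 1 else i = \<sigma> i)"
    by (auto simp: rk_def)
  have eq: "{\<omega>. rk n \<omega> = \<sigma>} = {\<omega>\<in>space Pm. \<forall>i. if i \<in> {1..n} then 1 \<le> \<sigma> i \<and> card {j\<in>{1..n}. \<omega> j < \<omega> i} = \<sigma> i - 1 else i = \<sigma> i}"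
    unfolding fun_eq_iff pw space_Pm by simp
  have [measurable]: "Measurable.pred Pm (\<lambda>\<omega>. card {j\<in>{1..n}. \<omega> j < \<omega> i} = c)" for i c
    by (rule pred_card_eq) auto
  show ?thesis unfolding eq by measurable
qed

lemma meas_reindex: "(\<lambda>\<omega> i. \<omega> (f i)) \<in> Pm \<rightarrow>\<^sub>M Pm"
  unfolding Pm_def by (rule measurable_PiM_single') (auto simp: space_PiM measurable_coord[unfolded Pm_def])

lemma AE_inj: "AE \<omega> in Pm. inj_on \<omega> {1..n}"
proof -
  have "AE \<omega> in Pm. \<forall>p\<in>{1..n}\<times>{1..n}. fst p \<noteq> snd p \<longrightarrow> \<omega> (fst p) \<noteq> \<omega> (snd p)"
  proof (rule AE_finite_allI)
    fix p :: "nat \<times> nat"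
    show "AE \<omega> in Pm. fst p \<noteq> snd p \<longrightarrow> \<omega> (fst p) \<noteq> \<omega> (snd p)"
    proof (cases "fst p = snd p")
      case False
      have "{\<omega>\<in>space Pm. \<omega> (fst p) = \<omega> (snd p)} \<in> sets Pm" by measurable
      then show ?thesis using ties_null[OF False]
        by (intro AE_I'[where N="{\<omega>. \<omega> (fst p) = \<omega> (snd p)}"]) (auto simp: null_sets_def space_Pm)
    qed simp
  qed simp
  then show ?thesis by eventually_elim (auto simp: inj_on_def)
qed

lemma prob_rk_eq:
  assumes "\<sigma> permutes {1..n}"
  shows "P.prob {\<omega>. rk n \<omega> = \<sigma>} = 1 / fact n"
proof -
  have shift: "P.prob {\<omega>. rk n \<omega> = \<sigma>'} = P.prob {\<omega>. rk n \<omega> = \<sigma>' \<circ> inv \<tau>}"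
    if t: "\<tau> permutes {1..n}" for \<tau> \<sigma>'
  proof -
    have inj: "inj \<tau>" using t by (rule permutes_inj)
    have "P.prob {\<omega>. rk n \<omega> = \<sigma>'} = measure (distr Pm Pm (\<lambda>\<omega> i. \<omega> (\<tau> i))) {\<omega>. rk n \<omega> = \<sigma>'}"
      using distr_Pm_reindex[OF inj] by simp
    also have "\<dots> = P.prob ((\<lambda>\<omega> i. \<omega> (\<tau> i)) -` {\<omega>. rk n \<omega> = \<sigma>'} \<inter> space Pm)"
      by (rule measure_distr) (auto simp: sets_rk_eq intro: meas_reindex)
    also have "(\<lambda>\<omega> i. \<omega> (\<tau> i)) -` {\<omega>. rk n \<omega> = \<sigma>'} \<inter> space Pm = {\<omega>. rk n \<omega> = \<sigma>' \<circ> inv \<tau>}"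
    proof -
      have "rk n \<omega> \<circ> \<tau> = \<sigma>' \<longleftrightarrow> rk n \<omega> = \<sigma>' \<circ> inv \<tau>" for \<omega>
        using permutes_inv_o[OF t] by (metis comp_assoc comp_id)
      then show ?thesis using rk_comp[OF t] by (auto simp: space_Pm)
    qed
    finally show ?thesis .
  qed
  define c where "c = P.prob {\<omega>. rk n \<omega> = id}"
  have all: "P.prob {\<omega>. rk n \<omega> = \<sigma>'} = c" if "\<sigma>' permutes {1..n}" for \<sigma>'
    using shift[OF that, of \<sigma>'] permutes_inv_o[OF that] by (simp add: c_def)
  define S where "S = {p. p permutes {1..n}}"
  have finS: "finite S" unfolding S_def by (rule finite_permutations) simp
  have "P.prob (\<Union>p\<in>S. {\<omega>. rk n \<omega> = p}) = (\<Sum>p\<in>S. P.prob {\<omega>. rk n \<omega> = p})"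
    by (rule measure_finite_Union) (auto simp: finS sets_rk_eq disjoint_family_on_def)
  also have "\<dots> = (\<Sum>p\<in>S. c)" using all by (simp add: S_def)
  also have "\<dots> = fact n * c" using card_permutations[of "{1..n}" n] by (simp add: S_def)
  finally have sum: "P.prob (\<Union>p\<in>S. {\<omega>. rk n \<omega> = p}) = fact n * c" .
  have "P.prob (\<Union>p\<in>S. {\<omega>. rk n \<omega> = p}) = 1"
  proof (subst P.prob_eq_1)
    show "(\<Union>p\<in>S. {\<omega>. rk n \<omega> = p}) \<in> sets Pm" using finS by (auto simp: sets_rk_eq)
    show "AE x in Pm. x \<in> (\<Union>p\<in>S. {\<omega>. rk n \<omega> = p})"
      using AE_inj[of n]
    proof eventually_elim
      fix x :: "nat \<Rightarrow> real" assume "inj_on x {1..n}"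
      then have "rk n x permutes {1..n}" by (rule rk_permutes)
      then have "rk n x \<in> S" unfolding S_def by simp
      then show "x \<in> (\<Union>p\<in>S. {\<omega>. rk n \<omega> = p})" by blast
    qed
  qed
  with sum have "c = 1 / fact n" by (simp add: field_simps)
  then show ?thesis using all[OF assms] by simp
qed




definition incr :: "nat \<Rightarrow> nat \<Rightarrow> (nat \<Rightarrow> real) \<Rightarrow> bool" where
  "incr L s \<omega> = (\<forall>j\<in>{s..<s+L-1}. \<omega> j < \<omega> (Suc j))"

definition Ind :: "nat \<Rightarrow> nat \<Rightarrow> (nat \<Rightarrow> real) \<Rightarrow> real" where
  "Ind L s \<omega> = (if incr L s \<omega> then 1 else 0)"

definition Rset :: "nat \<Rightarrow> nat \<Rightarrow> nat set" where
  "Rset k n = {i. 1 \<le> i \<and> i + k - 1 \<le> n}"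

definition Tn :: "nat \<Rightarrow> nat \<Rightarrow> (nat \<Rightarrow> real) \<Rightarrow> real" where
  "Tn k n \<omega> = (\<Sum>i\<in>Rset k n. Ind k i \<omega>)"

lemma finite_Rset[simp]: "finite (Rset k n)"
  by (rule finite_subset[of _ "{..Suc n}"]) (auto simp: Rset_def)

lemma pred_incr[measurable]: "Measurable.pred Pm (\<lambda>\<omega>. incr L s \<omega>)"
  unfolding incr_def by (rule pred_intros_finite(3)) (auto intro!: borel_measurable_pred_less measurable_coord)

lemma meas_Ind[measurable]: "(\<lambda>\<omega>. Ind L s \<omega>) \<in> Pm \<rightarrow>\<^sub>M borel"
  unfolding Ind_def by (rule measurable_If) (auto intro: pred_incr)

lemma meas_Tn[measurable]: "(\<lambda>\<omega>. Tn k n \<omega>) \<in> Pm \<rightarrow>\<^sub>M borel"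
  unfolding Tn_def by (rule borel_measurable_sum) (rule meas_Ind)

lemma Y_rk: "1 \<le> k \<Longrightarrow> Y k n (rk n \<omega>) = Tn k n \<omega>"
proof -
  assume k: "1 \<le> k"
  have "{i. 1 \<le> i \<and> i + k - 1 \<le> n \<and> (\<forall>j. i \<le> j \<and> j < i + k - 1 \<longrightarrow> rk n \<omega> j < rk n \<omega> (Suc j))}
       = {i\<in>Rset k n. incr k i \<omega>}"
  proof -
    have "(\<forall>j. i \<le> j \<and> j < i + k - 1 \<longrightarrow> rk n \<omega> j < rk n \<omega> (Suc j)) \<longleftrightarrow> incr k i \<omega>"
      if i: "1 \<le> i" "i + k - 1 \<le> n" for i
    proof -
      have "rk n \<omega> j < rk n \<omega> (Suc j) \<longleftrightarrow> \<omega> j < \<omega> (Suc j)" if "i \<le> j" "j < i + k - 1" for j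
        using that i by (intro rk_less_iff) auto
      then show ?thesis unfolding incr_def by auto
    qed
    then show ?thesis unfolding Rset_def by auto
  qed
  then have "tight_incr_count k n (rk n \<omega>) = card {i\<in>Rset k n. incr k i \<omega>}"
    unfolding tight_incr_count_def by simp
  also have "real \<dots> = Tn k n \<omega>"
    unfolding Tn_def Ind_def by (simp add: sum.inter_filter[symmetric])
  finally show ?thesis unfolding Y_def by simp
qed

lemma AE_rk_perm: "AE \<omega> in Pm. rk n \<omega> permutes {1..n}"
  using AE_inj[of n] by eventually_elim (rule rk_permutes)

lemma distr_transfer:
  assumes k: "1 \<le> k"
  shows "distr Pm borel (Tn k n) = distr (measure_pmf (unif_perm n)) borel (Y k n)"
proof (rule measure_eqI)
  fix A :: "real set" assume A: "A \<in> sets (distr Pm borel (Tn k n))"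
  then have A': "A \<in> sets borel" by simp
  define S where "S = {p. p permutes {1..n}}"
  have finS: "finite S" unfolding S_def by (rule finite_permutations) simp
  have cardS: "card S = fact n" unfolding S_def using card_permutations[of "{1..n}" n] by simp
  have neS: "S \<noteq> {}" unfolding S_def using permutes_id by blast
  define B where "B = {p\<in>S. Y k n p \<in> A}"
  have finB: "finite B" using finS by (simp add: B_def)
  have "emeasure (distr Pm borel (Tn k n)) A = emeasure Pm (Tn k n -` A \<inter> space Pm)"
    by (rule emeasure_distr[OF meas_Tn A'])
  also have "\<dots> = emeasure Pm (\<Union>p\<in>B. {\<omega>. rk n \<omega> = p})"
  proof (rule emeasure_eq_AE)
    show "AE x in Pm. (x \<in> Tn k n -` A \<inter> space Pm) = (x \<in> (\<Union>p\<in>B. {\<omega>. rk n \<omega> = p}))"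
      using AE_rk_perm[of n]
    proof eventually_elim
      fix x assume x: "rk n x permutes {1..n}"
      have "x \<in> Tn k n -` A \<inter> space Pm \<longleftrightarrow> Y k n (rk n x) \<in> A"
        by (simp add: Y_rk[OF k] space_Pm)
      also have "\<dots> \<longleftrightarrow> rk n x \<in> B" using x by (simp add: B_def S_def)
      also have "\<dots> \<longleftrightarrow> x \<in> (\<Union>p\<in>B. {\<omega>. rk n \<omega> = p})" by blast
      finally show "(x \<in> Tn k n -` A \<inter> space Pm) = (x \<in> (\<Union>p\<in>B. {\<omega>. rk n \<omega> = p}))" .
    qed
    show "Tn k n -` A \<inter> space Pm \<in> sets Pm" by (rule measurable_sets[OF meas_Tn A'])
    show "(\<Union>p\<in>B. {\<omega>. rk n \<omega> = p}) \<in> sets Pm" using finB by (auto simp: sets_rk_eq)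
  qed
  also have "\<dots> = ennreal (P.prob (\<Union>p\<in>B. {\<omega>. rk n \<omega> = p}))"
    by (simp add: P.emeasure_eq_measure)
  also have "P.prob (\<Union>p\<in>B. {\<omega>. rk n \<omega> = p}) = (\<Sum>p\<in>B. P.prob {\<omega>. rk n \<omega> = p})"
    by (rule measure_finite_Union) (auto simp: finB sets_rk_eq disjoint_family_on_def)
  also have "\<dots> = (\<Sum>p\<in>B. 1 / fact n)"
    by (rule sum.cong) (auto simp: B_def S_def prob_rk_eq)
  also have "\<dots> = card B / fact n" by simp
  also have "card B / fact n = card (S \<inter> {p. Y k n p \<in> A}) / card S"
    by (simp add: B_def cardS Int_def)
  also have "ennreal \<dots> = emeasure (measure_pmf (unif_perm n)) {p. Y k n p \<in> A}"
    unfolding unif_perm_def S_def[symmetric]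
    by (subst emeasure_pmf_of_set[OF neS finS]) simp
  also have "\<dots> = emeasure (distr (measure_pmf (unif_perm n)) borel (Y k n)) A"
  proof -
    have m: "Y k n \<in> measure_pmf (unif_perm n) \<rightarrow>\<^sub>M borel" by simp
    show ?thesis by (subst emeasure_distr[OF m A']) (simp add: vimage_def)
  qed
  finally show "emeasure (distr Pm borel (Tn k n)) A = emeasure (distr (measure_pmf (unif_perm n)) borel (Y k n)) A" .
qed simp




lemma shift_integral:
  fixes f :: "(nat \<Rightarrow> real) \<Rightarrow> real"
  assumes f: "f \<in> borel_measurable Pm"
  shows "(\<integral>\<omega>. f (\<lambda>i. \<omega> (i + d)) \<partial>Pm) = (\<integral>\<omega>. f \<omega> \<partial>Pm)"
proof -
  have inj: "inj (\<lambda>i::nat. i + d)" by (simp add: inj_on_def)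
  have "(\<integral>\<omega>. f \<omega> \<partial>Pm) = (\<integral>\<omega>. f \<omega> \<partial>(distr Pm Pm (\<lambda>\<omega> i. \<omega> (i + d))))"
    using distr_Pm_reindex[OF inj] by simp
  also have "\<dots> = (\<integral>\<omega>. f (\<lambda>i. \<omega> (i + d)) \<partial>Pm)"
    by (rule integral_distr[OF meas_reindex f])
  finally show ?thesis by simp
qed

lemma shift_distr:
  fixes f :: "(nat \<Rightarrow> real) \<Rightarrow> real"
  assumes f: "f \<in> borel_measurable Pm"
  shows "distr Pm borel (\<lambda>\<omega>. f (\<lambda>i. \<omega> (i + d))) = distr Pm borel f"
proof -
  have inj: "inj (\<lambda>i::nat. i + d)" by (simp add: inj_on_def)
  have "distr Pm borel f = distr (distr Pm Pm (\<lambda>\<omega> i. \<omega> (i + d))) borel f"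
    using distr_Pm_reindex[OF inj] by simp
  also have "\<dots> = distr Pm borel (f \<circ> (\<lambda>\<omega> i. \<omega> (i + d)))"
    by (rule distr_distr[OF f meas_reindex])
  finally show ?thesis by (simp add: comp_def)
qed

lemma incr_shift: "incr L (s + d) \<omega> \<longleftrightarrow> incr L s (\<lambda>i. \<omega> (i + d))"
proof
  assume a: "incr L (s + d) \<omega>"
  show "incr L s (\<lambda>i. \<omega> (i + d))" unfolding incr_def
  proof
    fix j assume "j \<in> {s..<s + L - 1}"
    then have "j + d \<in> {s + d..<s + d + L - 1}" by auto
    then show "\<omega> (j + d) < \<omega> (Suc j + d)" using a unfolding incr_def by auto
  qed
next
  assume a: "incr L s (\<lambda>i. \<omega> (i + d))"
  show "incr L (s + d) \<omega>" unfolding incr_def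
  proof
    fix j assume j: "j \<in> {s + d..<s + d + L - 1}"
    then have "j - d \<in> {s..<s + L - 1}" by auto
    then have "\<omega> (j - d + d) < \<omega> (Suc (j - d) + d)" using a unfolding incr_def by auto
    then show "\<omega> j < \<omega> (Suc j)" using j by (simp add: Suc_diff_le)
  qed
qed

lemma Ind_shift: "Ind L (s + d) \<omega> = Ind L s (\<lambda>i. \<omega> (i + d))"
  unfolding Ind_def incr_shift ..

lemma chain_less:
  assumes ch: "\<forall>j\<in>{a..<b}. \<omega> j < \<omega> (Suc j)"
  shows "a \<le> i \<Longrightarrow> i < l \<Longrightarrow> l \<le> b \<Longrightarrow> (\<omega> i :: real) < \<omega> l"
proof (induction l)
  case 0 then show ?case by simp
next
  case (Suc l)
  show ?case
  proof (cases "i = l")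
    case True then show ?thesis using ch Suc.prems by auto
  next
    case False
    then have "\<omega> i < \<omega> l" using Suc by auto
    also have "\<omega> l < \<omega> (Suc l)" using ch Suc.prems False by auto
    finally show ?thesis .
  qed
qed

lemma incr_rk_id:
  assumes L: "1 \<le> L"
  shows "incr L 1 \<omega> \<longleftrightarrow> rk L \<omega> = id"
proof
  assume a: "incr L 1 \<omega>"
  then have ch: "\<forall>j\<in>{1..<L}. \<omega> j < \<omega> (Suc j)" unfolding incr_def by simp
  show "rk L \<omega> = id"
  proof
    fix i show "rk L \<omega> i = id i"
    proof (cases "i \<in> {1..L}")
      case True
      have "{j\<in>{1..L}. \<omega> j < \<omega> i} = {1..<i}"
      proof (intro equalityI subsetI)
        fix j assume j: "j \<in> {j\<in>{1..L}. \<omega> j < \<omega> i}"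
        show "j \<in> {1..<i}"
        proof (rule ccontr)
          assume "j \<notin> {1..<i}"
          then have "i \<le> j" using j by auto
          then have "\<omega> i \<le> \<omega> j" using chain_less[OF ch, of i j] True j by (cases "i = j") auto
          then show False using j by auto
        qed
      next
        fix j assume "j \<in> {1..<i}"
        then show "j \<in> {j\<in>{1..L}. \<omega> j < \<omega> i}" using chain_less[OF ch, of j i] True by auto
      qed
      then show ?thesis using True by (simp add: rk_def)
    next
      case False then show ?thesis by (auto simp: rk_def)
    qed
  qed
next
  assume a: "rk L \<omega> = id"
  show "incr L 1 \<omega>" unfolding incr_def
  proof
    fix j assume "j \<in> {1..<1 + L - 1}"
    then have "j \<in> {1..L}" "Suc j \<in> {1..L}" by auto
    moreover have "rk L \<omega> j < rk L \<omega> (Suc j)" using a by simp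
    ultimately show "\<omega> j < \<omega> (Suc j)" using rk_less_iff by blast
  qed
qed

lemma Ind_indicator: "Ind L s \<omega> = indicator {\<omega>. incr L s \<omega>} \<omega>"
  by (simp add: Ind_def indicator_def)

lemma integrable_bounded_Pm:
  fixes f :: "(nat \<Rightarrow> real) \<Rightarrow> real"
  assumes "f \<in> borel_measurable Pm" "\<And>\<omega>. \<bar>f \<omega>\<bar> \<le> B"
  shows "integrable Pm f"
  using assms by (intro P.integrable_const_bound[of _ B]) auto

lemma integrable_Ind[simp]: "integrable Pm (\<lambda>\<omega>. Ind L s \<omega>)"
  by (rule integrable_bounded_Pm[of _ 1]) (auto simp: Ind_def intro: meas_Ind)

lemma sets_incr: "{\<omega>. incr L s \<omega>} \<in> sets Pm"
  using pred_incr[of L s] unfolding pred_def by (simp add: space_Pm)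

lemma E_Ind1:
  assumes L: "1 \<le> L"
  shows "(\<integral>\<omega>. Ind L 1 \<omega> \<partial>Pm) = 1 / fact L"
proof -
  have "(\<integral>\<omega>. Ind L 1 \<omega> \<partial>Pm) = P.prob {\<omega>. incr L 1 \<omega>}"
    unfolding Ind_indicator by (simp add: space_Pm)
  also have "{\<omega>. incr L 1 \<omega>} = {\<omega>. rk L \<omega> = id}" using incr_rk_id[OF L] by auto
  also have "P.prob \<dots> = 1 / fact L" by (rule prob_rk_eq) (rule permutes_id)
  finally show ?thesis .
qed

lemma E_Ind:
  assumes L: "1 \<le> L" and s: "1 \<le> s"
  shows "(\<integral>\<omega>. Ind L s \<omega> \<partial>Pm) = 1 / fact L"
proof -
  have "(\<integral>\<omega>. Ind L s \<omega> \<partial>Pm) = (\<integral>\<omega>. Ind L 1 (\<lambda>i. \<omega> (i + (s - 1))) \<partial>Pm)"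
    using Ind_shift[of L 1 "s - 1"] s by simp
  also have "\<dots> = (\<integral>\<omega>. Ind L 1 \<omega> \<partial>Pm)" by (rule shift_integral) (rule meas_Ind)
  finally show ?thesis using E_Ind1[OF L] by simp
qed




lemma meas_comp_K: "j \<in> K \<Longrightarrow> (\<lambda>f. f j) \<in> PiM K (\<lambda>_. U) \<rightarrow>\<^sub>M borel"
  using measurable_component_singleton[of j K "\<lambda>_. U"] measurable_cong_sets[OF refl sets_U, of "PiM K (\<lambda>_. U)"] by simp

lemma meas_Ind_K:
  assumes "{s..<s+L} \<subseteq> K"
  shows "(\<lambda>f. Ind L s f) \<in> PiM K (\<lambda>_. U) \<rightarrow>\<^sub>M borel"
proof -
  have "Measurable.pred (PiM K (\<lambda>_. U)) (\<lambda>f. incr L s f)"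
    unfolding incr_def
    by (rule pred_intros_finite(3)) (use assms in \<open>auto intro!: borel_measurable_pred_less meas_comp_K\<close>)
  note p = this
  show ?thesis unfolding Ind_def apply (rule measurable_If) using p by auto
qed

lemma Ind_restrict:
  assumes "{s..<s+L} \<subseteq> K"
  shows "Ind L s (restrict \<omega> K) = Ind L s \<omega>"
proof -
  have "incr L s (restrict \<omega> K) \<longleftrightarrow> incr L s \<omega>"
  proof -
    have inK: "\<And>j. s \<le> j \<Longrightarrow> j < s + L \<Longrightarrow> j \<in> K" using assms by auto
    show ?thesis unfolding incr_def by (intro ball_cong) (auto simp: inK)
  qed
  then show ?thesis by (simp add: Ind_def)
qed

lemma indep_blocks:
  fixes F :: "'b \<Rightarrow> (nat \<Rightarrow> real) \<Rightarrow> real"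
  assumes disj: "disjoint_family_on K I"
    and g: "\<And>b. b \<in> I \<Longrightarrow> g b \<in> PiM (K b) (\<lambda>_. U) \<rightarrow>\<^sub>M borel"
    and F: "\<And>b \<omega>. b \<in> I \<Longrightarrow> F b \<omega> = g b (restrict \<omega> (K b))"
  shows "P.indep_vars (\<lambda>_. borel) F I"
proof -
  have "P.indep_vars (\<lambda>j. PiM (K j) (\<lambda>_. U)) (\<lambda>j \<omega>. restrict (\<lambda>i. \<omega> i) (K j)) I"
    by (rule P.indep_vars_restrict[OF indep_coords]) (use disj in simp_all)
  then have "P.indep_vars (\<lambda>_. borel) (\<lambda>j \<omega>. g j (restrict (\<lambda>i. \<omega> i) (K j))) I"
    by (rule P.indep_vars_compose2) (rule g)
  moreover have "\<And>b. b \<in> I \<Longrightarrow> (\<lambda>\<omega>. g b (restrict (\<lambda>i. \<omega> i) (K b))) = F b"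
    using F by auto
  ultimately show ?thesis
    using P.indep_vars_cong[of I I F "\<lambda>j \<omega>. g j (restrict (\<lambda>i. \<omega> i) (K j))" "\<lambda>_. borel" "\<lambda>_. borel"] by metis
qed

lemma Ind_prod_near:
  assumes "s \<le> t" "t < s + k"
  shows "Ind k s \<omega> * Ind k t \<omega> = Ind (t - s + k) s \<omega>"
proof -
  have H: "{s..<s + (t - s + k) - 1} = {s..<s + k - 1} \<union> {t..<t + k - 1}"
    using assms by (intro set_eqI) (simp; linarith)
  have "(incr k s \<omega> \<and> incr k t \<omega>) \<longleftrightarrow> incr (t - s + k) s \<omega>"
    unfolding incr_def H ball_Un ..
  then show ?thesis by (auto simp: Ind_def)
qed

lemma E_Ind_prod_far:
  assumes "s + k \<le> t"
  shows "(\<integral>\<omega>. Ind k s \<omega> * Ind k t \<omega> \<partial>Pm) = (\<integral>\<omega>. Ind k s \<omega> \<partial>Pm) * (\<integral>\<omega>. Ind k t \<omega> \<partial>Pm)"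
proof -
  define K where "K = case_bool {s..<s+k} {t..<t+k}"
  define g where "g = case_bool (\<lambda>f. Ind k s f) (\<lambda>f. Ind k t f)"
  define F where "F = case_bool (Ind k s) (Ind k t)"
  have "P.indep_vars (\<lambda>_. borel) F UNIV"
  proof (rule indep_blocks[where K=K and g=g])
    have H: "{s..<s+k} \<inter> {t..<t+k} = {}" using assms by auto
    show "disjoint_family_on K UNIV"
      unfolding disjoint_family_on_def
    proof (intro ballI impI)
      fix a b :: bool assume "a \<noteq> b"
      then show "K a \<inter> K b = {}" using H by (cases a; cases b) (simp_all add: K_def Int_commute)
    qed
    show "g b \<in> PiM (K b) (\<lambda>_. U) \<rightarrow>\<^sub>M borel" for b
      by (cases b) (simp_all add: g_def K_def meas_Ind_K)
    show "F b \<omega> = g b (restrict \<omega> (K b))" for b \<omega>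
      by (cases b) (simp_all add: F_def g_def K_def Ind_restrict)
  qed
  moreover have "(\<lambda>_. borel) = case_bool borel (borel :: real measure)"
    by (rule ext) (simp split: bool.split)
  ultimately have "P.indep_var borel (Ind k s) borel (Ind k t)"
    unfolding P.indep_var_def F_def by simp
  then show ?thesis by (rule P.indep_var_lebesgue_integral) simp_all
qed




definition dd :: "nat \<Rightarrow> nat \<Rightarrow> nat" where
  "dd i j = (if i \<le> j then j - i else i - j)"

locale runs =
  fixes k :: nat
  assumes k2: "2 \<le> k"
begin

definition mu :: real where "mu = 1 / fact k"

definition g :: "nat \<Rightarrow> real" where
  "g d = (if d < k then 1 / fact (k + d) - mu\<^sup>2 else 0)"

definition cc :: "nat \<Rightarrow> (nat \<Rightarrow> real) \<Rightarrow> real" where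
  "cc i \<omega> = Ind k i \<omega> - mu"

lemma k1: "1 \<le> k" using k2 by simp

lemma mu_pos: "0 < mu" by (simp add: mu_def)

lemma mu_le1: "mu \<le> 1" by (simp add: mu_def)

lemma E_Ind_k: "1 \<le> i \<Longrightarrow> (\<integral>\<omega>. Ind k i \<omega> \<partial>Pm) = mu"
  using E_Ind[OF k1] by (simp add: mu_def)

lemma meas_cc: "(\<lambda>\<omega>. cc i \<omega>) \<in> borel_measurable Pm"
  unfolding cc_def by (intro borel_measurable_diff meas_Ind borel_measurable_const)

lemma abs_cc: "\<bar>cc i \<omega>\<bar> \<le> 1"
  using mu_pos mu_le1 by (auto simp: cc_def Ind_def)

lemma integrable_cc_prod: "integrable Pm (\<lambda>\<omega>. cc i \<omega> * cc j \<omega>)"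
proof (rule integrable_bounded_Pm[of _ 1])
  show "(\<lambda>\<omega>. cc i \<omega> * cc j \<omega>) \<in> borel_measurable Pm"
    by (intro borel_measurable_times meas_cc)
  show "\<bar>cc i \<omega> * cc j \<omega>\<bar> \<le> 1" for \<omega>
    using abs_cc[of i \<omega>] abs_cc[of j \<omega>] by (simp add: abs_mult mult_le_one)
qed

lemma integrable_cc: "integrable Pm (\<lambda>\<omega>. cc i \<omega>)"
  by (rule integrable_bounded_Pm[of _ 1]) (auto simp: abs_cc meas_cc)

lemma E_cc: "1 \<le> i \<Longrightarrow> (\<integral>\<omega>. cc i \<omega> \<partial>Pm) = 0"
  unfolding cc_def by (subst Bochner_Integration.integral_diff) (auto simp: E_Ind_k P.prob_space)

lemma E_Ind_prod_le:
  assumes "1 \<le> i" "i \<le> j"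
  shows "(\<integral>\<omega>. Ind k i \<omega> * Ind k j \<omega> \<partial>Pm) = g (j - i) + mu\<^sup>2"
proof (cases "j < i + k")
  case True
  then have "(\<integral>\<omega>. Ind k i \<omega> * Ind k j \<omega> \<partial>Pm) = (\<integral>\<omega>. Ind (j - i + k) i \<omega> \<partial>Pm)"
    using Ind_prod_near[OF assms(2) True] by simp
  also have "\<dots> = 1 / fact (j - i + k)" using assms k1 by (intro E_Ind) auto
  moreover have "j - i < k" using True assms by linarith
  ultimately show ?thesis by (simp add: g_def add.commute)
next
  case False
  then have "(\<integral>\<omega>. Ind k i \<omega> * Ind k j \<omega> \<partial>Pm) = mu * mu"
    using E_Ind_prod_far[of i k j] E_Ind_k assms by simp
  moreover have "\<not> j - i < k" using False assms by linarith
  ultimately show ?thesis by (simp add: g_def power2_eq_square)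
qed

lemma E_cc_prod:
  assumes "1 \<le> i" "1 \<le> j"
  shows "(\<integral>\<omega>. cc i \<omega> * cc j \<omega> \<partial>Pm) = g (dd i j)"
proof -
  have eq: "cc i \<omega> * cc j \<omega> = Ind k i \<omega> * Ind k j \<omega> - mu * Ind k i \<omega> - mu * Ind k j \<omega> + mu * mu" for \<omega>
    by (simp add: cc_def algebra_simps)
  have int: "integrable Pm (\<lambda>\<omega>. Ind k i \<omega> * Ind k j \<omega>)"
    by (rule integrable_bounded_Pm[of _ 1]) (auto simp: Ind_def intro!: borel_measurable_times meas_Ind)
  have "(\<integral>\<omega>. cc i \<omega> * cc j \<omega> \<partial>Pm) = (\<integral>\<omega>. Ind k i \<omega> * Ind k j \<omega> \<partial>Pm) - mu * mu - mu * mu + mu * mu"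
    unfolding eq using int assms by (simp add: E_Ind_k P.prob_space)
  also have "(\<integral>\<omega>. Ind k i \<omega> * Ind k j \<omega> \<partial>Pm) = g (dd i j) + mu\<^sup>2"
  proof (cases "i \<le> j")
    case True then show ?thesis using E_Ind_prod_le[of i j] assms by (simp add: dd_def)
  next
    case False
    then have "(\<integral>\<omega>. Ind k i \<omega> * Ind k j \<omega> \<partial>Pm) = (\<integral>\<omega>. Ind k j \<omega> * Ind k i \<omega> \<partial>Pm)"
      by (simp add: mult.commute)
    also have "\<dots> = g (i - j) + mu\<^sup>2" using E_Ind_prod_le[of j i] assms False by simp
    finally show ?thesis using False by (simp add: dd_def)
  qed
  finally show ?thesis by (simp add: power2_eq_square)
qed

definition Vs :: "nat set \<Rightarrow> real" where
  "Vs G = (\<Sum>i\<in>G. \<Sum>j\<in>G. g (dd i j))"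

lemma E_sq_sum:
  assumes fin: "finite G" and pos: "\<And>i. i \<in> G \<Longrightarrow> 1 \<le> i"
  shows "(\<integral>\<omega>. (\<Sum>i\<in>G. cc i \<omega>)\<^sup>2 \<partial>Pm) = Vs G"
proof -
  have "(\<integral>\<omega>. (\<Sum>i\<in>G. cc i \<omega>)\<^sup>2 \<partial>Pm) = (\<integral>\<omega>. (\<Sum>i\<in>G. \<Sum>j\<in>G. cc i \<omega> * cc j \<omega>) \<partial>Pm)"
    by (simp add: power2_eq_square sum_product)
  also have "\<dots> = (\<Sum>i\<in>G. \<Sum>j\<in>G. (\<integral>\<omega>. cc i \<omega> * cc j \<omega> \<partial>Pm))"
    by (simp add: Bochner_Integration.integral_sum integrable_cc_prod integrable_sum)
  also have "\<dots> = Vs G"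
    unfolding Vs_def using pos by (intro sum.cong refl) (simp add: E_cc_prod)
  finally show ?thesis .
qed

lemma abs_g: "\<bar>g d\<bar> \<le> 1"
proof -
  have a: "0 \<le> mu\<^sup>2" "mu\<^sup>2 \<le> 1" using mu_pos mu_le1 by (auto simp: power_le_one)
  have b: "0 \<le> 1 / (fact (k + d) :: real)" by (intro divide_nonneg_nonneg) simp_all
  have c: "1 / fact (k + d) \<le> (1::real)" using fact_ge_1[of "k+d", where 'a=real] by (simp add: divide_le_eq)
  have "\<bar>1 / fact (k + d) - mu\<^sup>2\<bar> \<le> 1" using a b c by (simp only: abs_le_iff) linarith
  then show ?thesis by (simp add: g_def)
qed

lemma card_near: "card {j. dd i j < k} \<le> 2 * k - 1"
proof -
  have "{j. dd i j < k} \<subseteq> {i + 1 - k..<i + k}" by (auto simp: dd_def)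
  then have "card {j. dd i j < k} \<le> card {i + 1 - k..<i + k}" by (intro card_mono) auto
  also have "\<dots> \<le> 2 * k - 1" by simp
  finally show ?thesis .
qed

lemma Vs_bound:
  assumes fin: "finite G"
  shows "Vs G \<le> (2 * k - 1) * card G"
proof -
  have row: "(\<Sum>j\<in>G. g (dd i j)) \<le> 2 * k - 1" for i
  proof -
    have "(\<Sum>j\<in>G. g (dd i j)) = (\<Sum>j\<in>G \<inter> {j. dd i j < k}. g (dd i j))"
      using fin by (intro sum.mono_neutral_right) (auto simp: g_def)
    also have "\<dots> \<le> (\<Sum>j\<in>G \<inter> {j. dd i j < k}. 1)"
      using abs_g by (intro sum_mono) (auto simp: abs_le_iff)
    also have "\<dots> = card (G \<inter> {j. dd i j < k})" by simp
    also have "\<dots> \<le> 2 * k - 1"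
    proof -
      have "finite {j. dd i j < k}"
        by (rule finite_subset[OF _ finite_atLeastLessThan[of "i + 1 - k" "i + k"]]) (auto simp: dd_def)
      then have "card (G \<inter> {j. dd i j < k}) \<le> card {j. dd i j < k}" by (intro card_mono) auto
      then show ?thesis using card_near[of i] by linarith
    qed
    finally show ?thesis using k1 by (simp add: of_nat_diff)
  qed
  have "Vs G \<le> (\<Sum>i\<in>G. real (2 * k - 1))" unfolding Vs_def by (intro sum_mono row)
  then show ?thesis by (simp add: mult.commute)
qed

end




context runs begin

definition D :: "nat \<Rightarrow> real" where
  "D N = (\<Sum>i<N. \<Sum>j<N. g (dd i j))"

lemma dd_shift: "dd (a + i) (a + j) = dd i j"
  by (simp add: dd_def)

lemma Vs_interval: "Vs {a..<a+N} = D N"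
proof -
  have e: "{a..<a+N} = {0+a..<N+a}" by (simp add: add.commute)
  have "Vs {a..<a+N} = (\<Sum>i\<in>{0..<N}. \<Sum>j\<in>{0..<N}. g (dd (a + i) (a + j)))"
    unfolding Vs_def e sum.atLeastLessThan_shift_bounds by (simp add: comp_def)
  then show ?thesis unfolding D_def dd_shift by (simp add: atLeast0LessThan)
qed

lemma D_Suc: "D (Suc N) = D N + 2 * (\<Sum>j<N. g (N - j)) + g 0"
proof -
  have "D (Suc N) = (\<Sum>i<Suc N. (\<Sum>j<N. g (dd i j)) + g (dd i N))"
    unfolding D_def by simp
  also have "\<dots> = (\<Sum>i<N. (\<Sum>j<N. g (dd i j)) + g (dd i N)) + ((\<Sum>j<N. g (dd N j)) + g (dd N N))"
    by simp
  also have "(\<Sum>i<N. (\<Sum>j<N. g (dd i j)) + g (dd i N)) = D N + (\<Sum>i<N. g (N - i))"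
    unfolding D_def sum.distrib by (simp add: dd_def)
  also have "(\<Sum>j<N. g (dd N j)) = (\<Sum>j<N. g (N - j))"
    by (intro sum.cong) (auto simp: dd_def)
  finally show ?thesis by (simp add: dd_def)
qed

definition S1 :: real where "S1 = (\<Sum>d\<in>{1..<k}. g d)"

definition sig2 :: real where "sig2 = g 0 + 2 * S1"

lemma sum_gN:
  assumes "k - 1 \<le> N"
  shows "(\<Sum>j<N. g (N - j)) = S1"
proof -
  have "(\<Sum>j<N. g (N - j)) = (\<Sum>d\<in>{1..N}. g d)"
    by (rule sum.reindex_bij_witness[where i="\<lambda>d. N - d" and j="\<lambda>j. N - j"]) auto
  also have "\<dots> = (\<Sum>d\<in>{1..<k}. g d)"
    using assms by (intro sum.mono_neutral_right) (auto simp: g_def)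
  finally show ?thesis unfolding S1_def .
qed

lemma D_lin:
  assumes "k - 1 \<le> N"
  shows "D N = D (k - 1) + (real N - real (k - 1)) * sig2"
  using assms
proof (induction N rule: dec_induct)
  case base then show ?case by simp
next
  case (step N)
  have "D (Suc N) = D N + sig2"
    unfolding D_Suc sum_gN[OF step(1)] sig2_def by simp
  then show ?case using step by (simp add: algebra_simps)
qed

lemma sig2_pos: "0 < sig2"
proof -
  have g0: "g 0 = mu - mu\<^sup>2" using k1 by (simp add: g_def mu_def)
  have gd: "g d = 1 / fact (k + d) - mu\<^sup>2" if "d \<in> {1..<k}" for d
    using that by (simp add: g_def)
  have "S1 = (\<Sum>d\<in>{1..<k}. 1 / fact (k + d)) - (k - 1) * mu\<^sup>2"
    unfolding S1_def using gd by (simp add: sum_subtractf of_nat_diff)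
  moreover have "(\<Sum>d\<in>{1..<k}. 1 / fact (k + d)) \<ge> (1 / fact (k + 1) :: real)"
  proof -
    have "1 \<in> {1..<k}" using k2 by simp
    then have "(\<lambda>d. 1 / (fact (k + d) :: real)) 1 \<le> sum (\<lambda>d. 1 / (fact (k + d) :: real)) {1..<k}"
      by (intro member_le_sum) auto
    then show ?thesis by simp
  qed
  ultimately have "sig2 \<ge> mu - mu\<^sup>2 + 2 * (1 / fact (k + 1) - (k - 1) * mu\<^sup>2)"
    unfolding sig2_def g0 by simp
  also have "1 / fact (k + 1) = mu / (k + 1)"
    by (simp add: mu_def fact_Suc field_simps)
  finally have ge: "sig2 \<ge> mu * (1 - (2 * k - 1) * mu + 2 / (k + 1))"
    using k1 by (simp add: algebra_simps power2_eq_square of_nat_diff)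
  have "(2 * k - 1) * mu < 1 + 2 / (k + 1)"
  proof (cases "k = 2")
    case True
    have "mu = 1 / 2" unfolding mu_def using True by (simp add: fact_numeral)
    then show ?thesis using True by simp
  next
    case False
    then have k3: "3 \<le> k" using k2 by simp
    have "2 * k \<le> fact k"
      using k3
    proof (induction k rule: dec_induct)
      case base then show ?case by (simp add: fact_numeral)
    next
      case (step m)
      have h: "m * 1 \<le> m * fact m" by (intro mult_le_mono2) (rule fact_ge_1)
      have "Suc (Suc (2 * m)) \<le> fact m + m * fact m" using step(1,3) h by linarith
      then show ?case by (simp add: fact_Suc)
    qed
    then have "real (2 * k) \<le> fact k" by (metis of_nat_fact of_nat_le_iff)
    then have "(2 * k - 1) * mu < 1" using k1 by (simp add: mu_def field_simps of_nat_diff)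
    moreover have "0 \<le> 2 / real (k + 1)" by simp
    ultimately show ?thesis by linarith
  qed
  then have "0 < mu * (1 - (2 * k - 1) * mu + 2 / (k + 1))"
    using mu_pos by (intro mult_pos_pos) auto
  with ge show ?thesis by linarith
qed

end




definition Phi :: "real \<Rightarrow> real" where "Phi = cdf std_normal_distribution"

interpretation N: real_distribution std_normal_distribution by (rule real_dist_normal_dist)

lemma Phi_mono: "x \<le> y \<Longrightarrow> Phi x \<le> Phi y"
  unfolding Phi_def by (rule N.cdf_nondecreasing)

lemma Phi_cont: "isCont Phi x"
proof -
  have "emeasure std_normal_distribution {x} = (\<integral>\<^sup>+ y. ennreal (std_normal_density y) * indicator {x} y \<partial>lborel)"
    by (rule emeasure_density) auto
  also have "\<dots> = 0" by (rule nn_integral_null_set) auto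
  finally have "measure std_normal_distribution {x} = 0" by (simp add: measure_def)
  then show ?thesis unfolding Phi_def by (simp add: N.isCont_cdf)
qed

lemma Phi_cont_at: "\<exists>d>0. \<forall>z. \<bar>z - x\<bar> < d \<longrightarrow> \<bar>Phi z - Phi x\<bar> < e" if "e > 0"
proof -
  have "\<forall>r>0. \<exists>s>0. \<forall>z. z \<noteq> x \<and> \<bar>z - x\<bar> < s \<longrightarrow> \<bar>Phi z - Phi x\<bar> < r"
    using Phi_cont[of x] unfolding isCont_def LIM_eq by (simp add: dist_real_def)
  then obtain s where s: "s > 0" "\<And>z. z \<noteq> x \<Longrightarrow> \<bar>z - x\<bar> < s \<Longrightarrow> \<bar>Phi z - Phi x\<bar> < e"
    using \<open>e > 0\<close> by blast
  show ?thesis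
  proof (intro exI[of _ s] conjI allI impI)
    fix z assume "\<bar>z - x\<bar> < s"
    then show "\<bar>Phi z - Phi x\<bar> < e" using s \<open>e > 0\<close> by (cases "z = x") auto
  qed (use s in auto)
qed

lemma cdf_comp_conv:
  fixes F :: "nat \<Rightarrow> real \<Rightarrow> real" and Nn :: "nat \<Rightarrow> nat" and r :: "nat \<Rightarrow> real"
  assumes F: "\<And>y. (\<lambda>N. F N y) \<longlonglongrightarrow> Phi y"
    and mono: "\<And>N a b. a \<le> b \<Longrightarrow> F N a \<le> F N b"
    and Nn: "filterlim Nn at_top sequentially"
    and r: "r \<longlonglongrightarrow> r0"
  shows "(\<lambda>n. F (Nn n) (y * r n)) \<longlonglongrightarrow> Phi (y * r0)"
proof (rule tendstoI)
  fix e :: real assume e: "e > 0"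
  obtain d where d: "d > 0" "\<And>z. \<bar>z - y * r0\<bar> < d \<Longrightarrow> \<bar>Phi z - Phi (y * r0)\<bar> < e / 2"
    using Phi_cont_at[of "e / 2" "y * r0"] e by auto
  define zp where "zp = y * r0 + d / 2"
  define zm where "zm = y * r0 - d / 2"
  have Fp: "(\<lambda>n. F (Nn n) zp) \<longlonglongrightarrow> Phi zp" by (rule filterlim_compose[OF F Nn])
  have Fm: "(\<lambda>n. F (Nn n) zm) \<longlonglongrightarrow> Phi zm" by (rule filterlim_compose[OF F Nn])
  have yr: "(\<lambda>n. y * r n) \<longlonglongrightarrow> y * r0" by (intro tendsto_intros r)
  have e1: "eventually (\<lambda>n. \<bar>y * r n - y * r0\<bar> < d / 2) sequentially"
    using tendstoD[OF yr, of "d / 2"] d by (simp add: dist_real_def)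
  have e2: "eventually (\<lambda>n. \<bar>F (Nn n) zp - Phi zp\<bar> < e / 2) sequentially"
    using tendstoD[OF Fp, of "e / 2"] e by (simp add: dist_real_def)
  have e3: "eventually (\<lambda>n. \<bar>F (Nn n) zm - Phi zm\<bar> < e / 2) sequentially"
    using tendstoD[OF Fm, of "e / 2"] e by (simp add: dist_real_def)
  have pp: "\<bar>Phi zp - Phi (y * r0)\<bar> < e / 2" using d by (intro d(2)) (simp add: zp_def)
  have pm: "\<bar>Phi zm - Phi (y * r0)\<bar> < e / 2" using d by (intro d(2)) (simp add: zm_def)
  show "eventually (\<lambda>n. dist (F (Nn n) (y * r n)) (Phi (y * r0)) < e) sequentially"
    using e1 e2 e3
  proof eventually_elim
    case (elim n)
    have "zm \<le> y * r n" "y * r n \<le> zp" using elim(1) unfolding zm_def zp_def abs_less_iff by linarith+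
    then have "F (Nn n) zm \<le> F (Nn n) (y * r n)" "F (Nn n) (y * r n) \<le> F (Nn n) zp"
      by (auto intro: mono)
    then show ?case using elim pp pm unfolding dist_real_def abs_less_iff by linarith
  qed
qed




lemma sets_le_Pm: "(f :: (nat \<Rightarrow> real) \<Rightarrow> real) \<in> borel_measurable Pm \<Longrightarrow> {\<omega>. f \<omega> \<le> y} \<in> sets Pm"
proof -
  assume f: "f \<in> borel_measurable Pm"
  have "f -` {..y} \<inter> space Pm \<in> sets Pm" by (rule measurable_sets[OF f]) simp
  then show ?thesis by (simp add: vimage_def space_Pm)
qed

lemma sets_abs_ge_Pm: "(f :: (nat \<Rightarrow> real) \<Rightarrow> real) \<in> borel_measurable Pm \<Longrightarrow> {\<omega>. d \<le> \<bar>f \<omega>\<bar>} \<in> sets Pm"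
proof -
  assume f: "f \<in> borel_measurable Pm"
  have "(\<lambda>\<omega>. \<bar>f \<omega>\<bar>) \<in> borel_measurable Pm" using f by (rule borel_measurable_abs)
  then have "(\<lambda>\<omega>. \<bar>f \<omega>\<bar>) -` {d..} \<inter> space Pm \<in> sets Pm" by (rule measurable_sets) simp
  then show ?thesis by (simp add: vimage_def space_Pm)
qed

lemma approx_conv:
  fixes X :: "nat \<Rightarrow> (nat \<Rightarrow> real) \<Rightarrow> real" and A B :: "nat \<Rightarrow> nat \<Rightarrow> (nat \<Rightarrow> real) \<Rightarrow> real"
    and c e :: "nat \<Rightarrow> real"
  assumes XAB: "\<And>p n \<omega>. X n \<omega> = A p n \<omega> + B p n \<omega>"
    and measA: "\<And>p n. A p n \<in> borel_measurable Pm"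
    and measB: "\<And>p n. B p n \<in> borel_measurable Pm"
    and intB: "\<And>p n. integrable Pm (\<lambda>\<omega>. (B p n \<omega>)\<^sup>2)"
    and Aconv: "eventually (\<lambda>p. \<forall>y. (\<lambda>n. P.prob {\<omega>. A p n \<omega> \<le> y}) \<longlonglongrightarrow> Phi (y * c p)) sequentially"
    and c: "c \<longlonglongrightarrow> 1"
    and Bbd: "\<And>p. eventually (\<lambda>n. (\<integral>\<omega>. (B p n \<omega>)\<^sup>2 \<partial>Pm) \<le> e p) sequentially"
    and e: "e \<longlonglongrightarrow> 0"
  shows "(\<lambda>n. P.prob {\<omega>. X n \<omega> \<le> x}) \<longlonglongrightarrow> Phi x"
proof (rule tendstoI)
  fix eps :: real assume eps: "eps > 0"
  obtain d where d: "d > 0" "\<And>z. \<bar>z - x\<bar> < d \<Longrightarrow> \<bar>Phi z - Phi x\<bar> < eps / 3"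
    using Phi_cont_at[of "eps / 3" x] eps by auto
  define \<delta> where "\<delta> = d / 3"
  have \<delta>: "\<delta> > 0" using d by (simp add: \<delta>_def)
  define \<eta> where "\<eta> = min (1/2) (\<delta> / (2 * (\<bar>x\<bar> + 1)))"
  have \<eta>: "\<eta> > 0" using \<delta> by (simp add: \<eta>_def)
  have ev1: "eventually (\<lambda>p. \<bar>c p - 1\<bar> < \<eta>) sequentially"
    using tendstoD[OF c \<eta>] by (simp add: dist_real_def)
  have ev2: "eventually (\<lambda>p. e p < eps * \<delta>\<^sup>2 / 3) sequentially"
    using order_tendstoD(2)[OF e, of "eps * \<delta>\<^sup>2 / 3"] eps \<delta> by simp
  obtain p where p: "\<forall>y. (\<lambda>n. P.prob {\<omega>. A p n \<omega> \<le> y}) \<longlonglongrightarrow> Phi (y * c p)"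
    "\<bar>c p - 1\<bar> < \<eta>" "e p < eps * \<delta>\<^sup>2 / 3"
    using eventually_happens'[OF sequentially_bot eventually_conj[OF Aconv eventually_conj[OF ev1 ev2]]]
    by blast
  have cp: "c p < 3/2" "\<bar>x\<bar> * \<bar>c p - 1\<bar> \<le> \<delta> / 2"
  proof -
    have "\<bar>c p - 1\<bar> < 1/2" using p(2) by (simp add: \<eta>_def)
    then show "c p < 3/2" unfolding abs_less_iff by linarith
    have "\<bar>c p - 1\<bar> \<le> \<delta> / (2 * (\<bar>x\<bar> + 1))" using p(2) by (simp add: \<eta>_def)
    then have "(\<bar>x\<bar> + 1) * \<bar>c p - 1\<bar> \<le> \<delta> / 2" using \<delta> by (simp add: field_simps)
    moreover have "0 \<le> \<bar>c p - 1\<bar>" by simp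
    moreover have "(\<bar>x\<bar> + 1) * \<bar>c p - 1\<bar> = \<bar>x\<bar> * \<bar>c p - 1\<bar> + \<bar>c p - 1\<bar>" by (simp add: distrib_right)
    ultimately show "\<bar>x\<bar> * \<bar>c p - 1\<bar> \<le> \<delta> / 2" by linarith
  qed
  have cp0: "c p > 0"
  proof -
    have "\<bar>c p - 1\<bar> < 1/2" using p(2) by (simp add: \<eta>_def)
    then show "c p > 0" unfolding abs_less_iff by linarith
  qed
  have close: "\<bar>(x + s) * c p - x\<bar> < d" if s: "\<bar>s\<bar> = \<delta>" for s
  proof -
    have "(x + s) * c p - x = x * (c p - 1) + s * c p" by (simp add: algebra_simps)
    then have "\<bar>(x + s) * c p - x\<bar> \<le> \<bar>x\<bar> * \<bar>c p - 1\<bar> + \<delta> * c p"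
      using s cp0 by (simp add: abs_mult) (metis abs_triangle_ineq abs_mult abs_of_pos)
    also have "\<dots> < \<delta> / 2 + \<delta> * (3/2)" using cp \<delta> by (intro add_le_less_mono) auto
    also have "\<dots> = d * (2/3)" by (simp add: \<delta>_def)
    finally show ?thesis using d by linarith
  qed
  have Pp: "\<bar>Phi ((x + \<delta>) * c p) - Phi x\<bar> < eps / 3" using close[of \<delta>] \<delta> d by simp
  have Pm': "\<bar>Phi ((x + - \<delta>) * c p) - Phi x\<bar> < eps / 3" using close[of "-\<delta>"] \<delta> d by (intro d(2)) simp
  have cheb: "P.prob {\<omega>. \<delta> \<le> \<bar>B p n \<omega>\<bar>} \<le> (\<integral>\<omega>. (B p n \<omega>)\<^sup>2 \<partial>Pm) / \<delta>\<^sup>2" for n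
    using P.second_moment_method[OF measB intB \<delta>, of p n] by (simp add: space_Pm)
  have A1: "eventually (\<lambda>n. \<bar>P.prob {\<omega>. A p n \<omega> \<le> x + \<delta>} - Phi ((x + \<delta>) * c p)\<bar> < eps / 3) sequentially"
    using tendstoD[OF p(1)[rule_format, of "x + \<delta>"], of "eps / 3"] eps by (simp add: dist_real_def)
  have A2: "eventually (\<lambda>n. \<bar>P.prob {\<omega>. A p n \<omega> \<le> x + - \<delta>} - Phi ((x + - \<delta>) * c p)\<bar> < eps / 3) sequentially"
    using tendstoD[OF p(1)[rule_format, of "x + - \<delta>"], of "eps / 3"] eps by (simp add: dist_real_def)
  show "eventually (\<lambda>n. dist (P.prob {\<omega>. X n \<omega> \<le> x}) (Phi x) < eps) sequentially"
    using A1 A2 Bbd[of p]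
  proof eventually_elim
    case (elim n)
    have Bs: "P.prob {\<omega>. \<delta> \<le> \<bar>B p n \<omega>\<bar>} < eps / 3"
    proof -
      have "P.prob {\<omega>. \<delta> \<le> \<bar>B p n \<omega>\<bar>} \<le> (\<integral>\<omega>. (B p n \<omega>)\<^sup>2 \<partial>Pm) / \<delta>\<^sup>2" by (rule cheb)
      also have "\<dots> \<le> e p / \<delta>\<^sup>2" using elim(3) \<delta> by (simp add: divide_right_mono)
      also have "\<dots> < eps / 3" using p(3) \<delta> by (simp add: field_simps)
      finally show ?thesis .
    qed
    have sB: "{\<omega>. \<delta> \<le> \<bar>B p n \<omega>\<bar>} \<in> sets Pm" by (rule sets_abs_ge_Pm[OF measB])
    have sA1: "{\<omega>. A p n \<omega> \<le> x + \<delta>} \<in> sets Pm" by (rule sets_le_Pm[OF measA])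
    have sA2: "{\<omega>. A p n \<omega> \<le> x + - \<delta>} \<in> sets Pm" by (rule sets_le_Pm[OF measA])
    have sX: "{\<omega>. X n \<omega> \<le> x} \<in> sets Pm"
    proof -
      have "X n = (\<lambda>\<omega>. A p n \<omega> + B p n \<omega>)" using XAB by auto
      then have "X n \<in> borel_measurable Pm" using measA measB by simp
      then show ?thesis by (rule sets_le_Pm)
    qed
    have up: "P.prob {\<omega>. X n \<omega> \<le> x} \<le> P.prob {\<omega>. A p n \<omega> \<le> x + \<delta>} + P.prob {\<omega>. \<delta> \<le> \<bar>B p n \<omega>\<bar>}"
    proof -
      have "{\<omega>. X n \<omega> \<le> x} \<subseteq> {\<omega>. A p n \<omega> \<le> x + \<delta>} \<union> {\<omega>. \<delta> \<le> \<bar>B p n \<omega>\<bar>}"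
      proof
        fix \<omega> assume "\<omega> \<in> {\<omega>. X n \<omega> \<le> x}"
        then have "X n \<omega> \<le> x" by simp
        then show "\<omega> \<in> {\<omega>. A p n \<omega> \<le> x + \<delta>} \<union> {\<omega>. \<delta> \<le> \<bar>B p n \<omega>\<bar>}"
          using XAB[of n \<omega> p] by (auto simp: abs_if split: if_splits)
      qed
      then have "P.prob {\<omega>. X n \<omega> \<le> x} \<le> P.prob ({\<omega>. A p n \<omega> \<le> x + \<delta>} \<union> {\<omega>. \<delta> \<le> \<bar>B p n \<omega>\<bar>})"
        using sA1 sB by (intro P.finite_measure_mono) auto
      also have "\<dots> \<le> P.prob {\<omega>. A p n \<omega> \<le> x + \<delta>} + P.prob {\<omega>. \<delta> \<le> \<bar>B p n \<omega>\<bar>}"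
        using sA1 sB by (rule measure_Un_le)
      finally show ?thesis .
    qed
    have lo: "P.prob {\<omega>. A p n \<omega> \<le> x + - \<delta>} \<le> P.prob {\<omega>. X n \<omega> \<le> x} + P.prob {\<omega>. \<delta> \<le> \<bar>B p n \<omega>\<bar>}"
    proof -
      have "{\<omega>. A p n \<omega> \<le> x + - \<delta>} \<subseteq> {\<omega>. X n \<omega> \<le> x} \<union> {\<omega>. \<delta> \<le> \<bar>B p n \<omega>\<bar>}"
      proof
        fix \<omega> assume "\<omega> \<in> {\<omega>. A p n \<omega> \<le> x + - \<delta>}"
        then have "A p n \<omega> \<le> x - \<delta>" by simp
        then show "\<omega> \<in> {\<omega>. X n \<omega> \<le> x} \<union> {\<omega>. \<delta> \<le> \<bar>B p n \<omega>\<bar>}"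
          using XAB[of n \<omega> p] by (auto simp: abs_if split: if_splits)
      qed
      then have "P.prob {\<omega>. A p n \<omega> \<le> x + - \<delta>} \<le> P.prob ({\<omega>. X n \<omega> \<le> x} \<union> {\<omega>. \<delta> \<le> \<bar>B p n \<omega>\<bar>})"
        using sX sB by (intro P.finite_measure_mono) auto
      also have "\<dots> \<le> P.prob {\<omega>. X n \<omega> \<le> x} + P.prob {\<omega>. \<delta> \<le> \<bar>B p n \<omega>\<bar>}"
        using sX sB by (rule measure_Un_le)
      finally show ?thesis .
    qed
    show ?case using up lo Bs elim(1,2) Pp Pm' unfolding dist_real_def abs_less_iff by linarith
  qed
qed




context runs begin

definition Lb :: "nat \<Rightarrow> nat" where "Lb p = p + k - 1"
definition blk :: "nat \<Rightarrow> nat \<Rightarrow> nat set" where "blk p b = {1 + b * Lb p..<1 + b * Lb p + p}"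
definition Kb :: "nat \<Rightarrow> nat \<Rightarrow> nat set" where "Kb p b = {1 + b * Lb p..<1 + b * Lb p + Lb p}"
definition Z :: "nat \<Rightarrow> nat \<Rightarrow> (nat \<Rightarrow> real) \<Rightarrow> real" where
  "Z p b \<omega> = (\<Sum>i\<in>blk p b. cc i \<omega>)"

lemma meas_Z: "(\<lambda>\<omega>. Z p b \<omega>) \<in> borel_measurable Pm"
  unfolding Z_def by (intro borel_measurable_sum meas_cc)

lemma Kb_div:
  assumes p: "1 \<le> p" and x: "x \<in> Kb p b"
  shows "(x - 1) div Lb p = b"
proof (rule div_nat_eqI)
  show "Lb p * b \<le> x - 1" using x by (auto simp: Kb_def mult.commute)
  show "x - 1 < Lb p * Suc b" using x by (auto simp: Kb_def algebra_simps)
qed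

lemma Kb_disj: "1 \<le> p \<Longrightarrow> disjoint_family_on (Kb p) UNIV"
  unfolding disjoint_family_on_def using Kb_div by blast

lemma Z_indep:
  assumes p: "1 \<le> p"
  shows "P.indep_vars (\<lambda>_. borel) (Z p) UNIV"
proof (rule indep_blocks[where K="Kb p" and g="\<lambda>b f. \<Sum>i\<in>blk p b. (Ind k i f - mu)"])
  show "disjoint_family_on (Kb p) UNIV" by (rule Kb_disj[OF p])
  have win: "{i..<i + k} \<subseteq> Kb p b" if "i \<in> blk p b" for i b
    using that k1 by (auto simp: blk_def Kb_def Lb_def)
  show "(\<lambda>f. \<Sum>i\<in>blk p b. (Ind k i f - mu)) \<in> PiM (Kb p b) (\<lambda>_. U) \<rightarrow>\<^sub>M borel" for b
    by (intro borel_measurable_sum borel_measurable_diff borel_measurable_const meas_Ind_K win)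
  show "Z p b \<omega> = (\<Sum>i\<in>blk p b. (Ind k i (restrict \<omega> (Kb p b)) - mu))" for b \<omega>
    unfolding Z_def cc_def by (intro sum.cong refl) (simp add: Ind_restrict[OF win])
qed

lemma Z_shift: "Z p b \<omega> = Z p 0 (\<lambda>i. \<omega> (i + b * Lb p))"
proof -
  have e: "blk p b = {1 + b * Lb p..<(1 + p) + b * Lb p}" by (simp add: blk_def algebra_simps)
  have "Z p b \<omega> = (\<Sum>i\<in>{1..<1 + p}. cc (b * Lb p + i) \<omega>)"
    unfolding Z_def e sum.atLeastLessThan_shift_bounds by (simp add: comp_def add.commute)
  also have "\<dots> = Z p 0 (\<lambda>i. \<omega> (i + b * Lb p))"
    unfolding Z_def blk_def cc_def
    by (intro sum.cong) (simp_all add: Ind_shift[symmetric] add.commute)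
  finally show ?thesis .
qed

lemma Z_distr: "distr Pm borel (Z p b) = distr Pm borel (Z p 0)"
proof -
  have "Z p b = (\<lambda>\<omega>. Z p 0 (\<lambda>i. \<omega> (i + b * Lb p)))" by (rule ext) (rule Z_shift)
  then have "distr Pm borel (Z p b) = distr Pm borel (\<lambda>\<omega>. Z p 0 (\<lambda>i. \<omega> (i + b * Lb p)))"
    by simp
  also have "\<dots> = distr Pm borel (Z p 0)" by (rule shift_distr) (rule meas_Z)
  finally show ?thesis .
qed

lemma blk_pos: "i \<in> blk p b \<Longrightarrow> 1 \<le> i"
  by (simp add: blk_def)

lemma E_Z: "(\<integral>\<omega>. Z p b \<omega> \<partial>Pm) = 0"
proof -
  have "(\<integral>\<omega>. Z p b \<omega> \<partial>Pm) = (\<Sum>i\<in>blk p b. (\<integral>\<omega>. cc i \<omega> \<partial>Pm))"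
    unfolding Z_def by (rule Bochner_Integration.integral_sum) (rule integrable_cc)
  also have "\<dots> = 0" by (intro sum.neutral ballI E_cc blk_pos)
  finally show ?thesis .
qed

lemma E_Z2: "(\<integral>\<omega>. (Z p b \<omega>)\<^sup>2 \<partial>Pm) = D p"
proof -
  have "(\<integral>\<omega>. (Z p b \<omega>)\<^sup>2 \<partial>Pm) = Vs (blk p b)"
    unfolding Z_def by (rule E_sq_sum) (auto simp: blk_def)
  also have "Vs (blk p b) = D p" unfolding blk_def by (rule Vs_interval)
  finally show ?thesis .
qed

lemma abs_Z: "\<bar>Z p b \<omega>\<bar> \<le> p"
proof -
  have "\<bar>Z p b \<omega>\<bar> \<le> (\<Sum>i\<in>blk p b. \<bar>cc i \<omega>\<bar>)" unfolding Z_def by (rule sum_abs)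
  also have "\<dots> \<le> (\<Sum>i\<in>blk p b. 1)" by (intro sum_mono abs_cc)
  finally show ?thesis by (simp add: blk_def)
qed

lemma int_Z2: "integrable Pm (\<lambda>\<omega>. (Z p b \<omega>)\<^sup>2)"
proof (rule integrable_bounded_Pm[of _ "real p ^ 2"])
  show "(\<lambda>\<omega>. (Z p b \<omega>)\<^sup>2) \<in> borel_measurable Pm" by (intro borel_measurable_power meas_Z)
  show "\<bar>(Z p b \<omega>)\<^sup>2\<bar> \<le> real p ^ 2" for \<omega>
    using power_mono[OF abs_Z[of p b \<omega>] abs_ge_zero, of 2] by simp
qed

lemma block_clt:
  assumes p: "1 \<le> p" and Dp: "0 < D p"
  shows "weak_conv_m (\<lambda>N. distr Pm borel (\<lambda>\<omega>. (\<Sum>b<N. Z p b \<omega>) / sqrt (N * D p))) std_normal_distribution"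
proof -
  have "weak_conv_m (\<lambda>N. distr Pm borel (\<lambda>\<omega>. (\<Sum>b<N. Z p b \<omega>) / sqrt (N * (sqrt (D p))\<^sup>2))) std_normal_distribution"
  proof (rule P.central_limit_theorem_zero_mean)
    show "P.indep_vars (\<lambda>i. borel) (Z p) UNIV" by (rule Z_indep[OF p])
    show "P.expectation (Z p b) = 0" for b using E_Z[of p b] by simp
    show "0 < sqrt (D p)" using Dp by simp
    show "integrable Pm (\<lambda>x. (Z p b x)\<^sup>2)" for b by (rule int_Z2)
    show "P.variance (Z p b) = (sqrt (D p))\<^sup>2" for b
      using E_Z[of p b] E_Z2[of p b] Dp by simp
    show "distr Pm borel (Z p b) = distr Pm borel (Z p 0)" for b by (rule Z_distr)
  qed
  then show ?thesis using Dp by simp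
qed

lemma block_cdf:
  assumes p: "1 \<le> p" and Dp: "0 < D p"
  shows "(\<lambda>N. P.prob {\<omega>. (\<Sum>b<N. Z p b \<omega>) / sqrt (N * D p) \<le> y}) \<longlonglongrightarrow> Phi y"
proof -
  have m: "(\<lambda>\<omega>. (\<Sum>b<N. Z p b \<omega>) / sqrt (N * D p)) \<in> borel_measurable Pm" for N
    by (intro borel_measurable_divide borel_measurable_sum meas_Z borel_measurable_const)
  have "(\<lambda>N. cdf (distr Pm borel (\<lambda>\<omega>. (\<Sum>b<N. Z p b \<omega>) / sqrt (N * D p))) y) \<longlonglongrightarrow> cdf std_normal_distribution y"
    using block_clt[OF p Dp] Phi_cont[of y] unfolding weak_conv_m_def weak_conv_def Phi_def by blast
  moreover have "cdf (distr Pm borel (\<lambda>\<omega>. (\<Sum>b<N. Z p b \<omega>) / sqrt (N * D p))) y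
      = P.prob {\<omega>. (\<Sum>b<N. Z p b \<omega>) / sqrt (N * D p) \<le> y}" for N
    unfolding cdf_def by (subst measure_distr[OF m]) (auto simp: vimage_def space_Pm)
  ultimately show ?thesis unfolding Phi_def by simp
qed

end




context runs begin

definition MM :: "nat \<Rightarrow> nat" where "MM n = n + 1 - k"
definition V :: "nat \<Rightarrow> real" where "V n = D (MM n)"
definition Nn :: "nat \<Rightarrow> nat \<Rightarrow> nat" where "Nn p n = MM n div Lb p"
definition Big :: "nat \<Rightarrow> nat \<Rightarrow> nat set" where "Big p n = (\<Union>b<Nn p n. blk p b)"
definition GG :: "nat \<Rightarrow> nat \<Rightarrow> nat set" where "GG p n = Rset k n - Big p n"
definition SA :: "nat \<Rightarrow> nat \<Rightarrow> (nat \<Rightarrow> real) \<Rightarrow> real" where "SA p n \<omega> = (\<Sum>b<Nn p n. Z p b \<omega>)"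
definition SB :: "nat \<Rightarrow> nat \<Rightarrow> (nat \<Rightarrow> real) \<Rightarrow> real" where "SB p n \<omega> = (\<Sum>i\<in>GG p n. cc i \<omega>)"

lemma Rset_eq: "Rset k n = {1..<1 + MM n}"
  using k1 by (auto simp: Rset_def MM_def)

lemma card_Rset: "card (Rset k n) = MM n"
  by (simp add: Rset_eq)

lemma Tn_cc: "Tn k n \<omega> - MM n * mu = (\<Sum>i\<in>Rset k n. cc i \<omega>)"
  unfolding Tn_def cc_def by (simp add: sum_subtractf card_Rset)

lemma E_Tn: "(\<integral>\<omega>. Tn k n \<omega> \<partial>Pm) = MM n * mu"
proof -
  have "(\<integral>\<omega>. Tn k n \<omega> \<partial>Pm) = (\<Sum>i\<in>Rset k n. (\<integral>\<omega>. Ind k i \<omega> \<partial>Pm))"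
    unfolding Tn_def by (rule Bochner_Integration.integral_sum) simp
  also have "\<dots> = (\<Sum>i\<in>Rset k n. mu)" by (intro sum.cong refl E_Ind_k) (simp add: Rset_def)
  finally show ?thesis by (simp add: card_Rset)
qed

lemma E_Tn_sq: "(\<integral>\<omega>. (Tn k n \<omega> - MM n * mu)\<^sup>2 \<partial>Pm) = V n"
proof -
  have "(\<integral>\<omega>. (Tn k n \<omega> - MM n * mu)\<^sup>2 \<partial>Pm) = Vs (Rset k n)"
    unfolding Tn_cc by (rule E_sq_sum) (simp, simp add: Rset_def)
  then show ?thesis by (simp add: V_def Rset_eq Vs_interval[of 1 "MM n", simplified])
qed

lemma Lb_ge: "p \<le> Lb p" using k1 by (simp add: Lb_def)

lemma blk_sub_Rset:
  assumes b: "b < Nn p n"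
  shows "blk p b \<subseteq> Rset k n"
proof -
  have "Suc b * Lb p \<le> Nn p n * Lb p" using b by (intro mult_le_mono1) simp
  also have "\<dots> \<le> MM n" unfolding Nn_def by (simp add: div_times_less_eq_dividend)
  finally have "b * Lb p + Lb p \<le> MM n" by simp
  then show ?thesis using Lb_ge[of p] by (auto simp: blk_def Rset_eq)
qed

lemma blk_sub_Kb: "blk p b \<subseteq> Kb p b"
  using Lb_ge[of p] by (auto simp: blk_def Kb_def)

lemma blk_disj: "1 \<le> p \<Longrightarrow> disjoint_family_on (blk p) UNIV"
  using Kb_disj blk_sub_Kb unfolding disjoint_family_on_def by blast

lemma finite_blk[simp]: "finite (blk p b)" by (simp add: blk_def)

lemma card_blk[simp]: "card (blk p b) = p" by (simp add: blk_def)

lemma Big_sub: "Big p n \<subseteq> Rset k n"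
  unfolding Big_def using blk_sub_Rset by blast

lemma decomp:
  assumes p: "1 \<le> p"
  shows "(\<Sum>i\<in>Rset k n. cc i \<omega>) = SA p n \<omega> + SB p n \<omega>"
proof -
  have "(\<Sum>i\<in>Rset k n. cc i \<omega>) = (\<Sum>i\<in>Big p n. cc i \<omega>) + (\<Sum>i\<in>GG p n. cc i \<omega>)"
    unfolding GG_def using Big_sub by (subst sum.subset_diff[of "Big p n"]) auto
  also have "(\<Sum>i\<in>Big p n. cc i \<omega>) = (\<Sum>b<Nn p n. \<Sum>i\<in>blk p b. cc i \<omega>)"
    unfolding Big_def
    by (rule sum.UNION_disjoint) (use blk_disj[OF p] in \<open>auto simp: disjoint_family_on_def\<close>)
  finally show ?thesis unfolding SA_def SB_def Z_def .
qed

lemma card_GG: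
  assumes p: "1 \<le> p"
  shows "real (card (GG p n)) \<le> real (Nn p n) * real (k - 1) + real (Lb p)"
proof -
  have cB: "card (Big p n) = Nn p n * p"
    unfolding Big_def
    by (subst card_UN_disjoint) (use blk_disj[OF p] in \<open>auto simp: disjoint_family_on_def\<close>)
  have "card (GG p n) = MM n - Nn p n * p"
  proof -
    have "finite (Big p n)" by (rule finite_subset[OF Big_sub finite_Rset])
    then show ?thesis unfolding GG_def using Big_sub[of p n] cB by (simp add: card_Diff_subset card_Rset)
  qed
  moreover have "MM n < Lb p * Suc (Nn p n)"
    unfolding Nn_def using Lb_ge[of p] p by (simp add: dividend_less_times_div)
  ultimately have "card (GG p n) \<le> Nn p n * (k - 1) + Lb p"
    using k1 by (simp add: Lb_def algebra_simps)
  then have "real (card (GG p n)) \<le> real (Nn p n * (k - 1) + Lb p)" by (simp only: of_nat_le_iff)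
  then show ?thesis by simp
qed

end




context runs begin

lemma MM_top: "filterlim MM at_top sequentially"
  unfolding filterlim_at_top eventually_sequentially
proof (intro allI)
  fix z show "\<exists>N. \<forall>n\<ge>N. z \<le> MM n" by (rule exI[of _ "z + k"]) (auto simp: MM_def)
qed

lemma rMM_top: "filterlim (\<lambda>n. real (MM n)) at_top sequentially"
  by (rule filterlim_compose[OF filterlim_real_sequentially MM_top])

lemma const_over_MM: "(\<lambda>n. a / real (MM n)) \<longlonglongrightarrow> 0"
  by (rule tendsto_divide_0[OF tendsto_const]) (rule filterlim_at_top_imp_at_infinity[OF rMM_top])

lemma MM_ev: "eventually (\<lambda>n. zz \<le> MM n) sequentially"
  using MM_top unfolding filterlim_at_top by auto

lemma Nn_top:
  assumes p: "1 \<le> p"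
  shows "filterlim (Nn p) at_top sequentially"
  unfolding filterlim_at_top
proof
  fix zz :: nat
  have L: "0 < Lb p" using p k1 by (simp add: Lb_def)
  show "eventually (\<lambda>n. zz \<le> Nn p n) sequentially"
    using MM_ev[of "zz * Lb p"]
  proof eventually_elim
    case (elim n)
    then show ?case unfolding Nn_def using L by (simp add: less_eq_div_iff_mult_less_eq)
  qed
qed

definition c0 :: real where "c0 = D (k - 1) - real (k - 1) * sig2"

lemma D_affine: "k - 1 \<le> N \<Longrightarrow> D N = real N * sig2 + c0"
  using D_lin[of N] by (simp add: c0_def algebra_simps)

lemma V_MM: "(\<lambda>n. V n / real (MM n)) \<longlonglongrightarrow> sig2"
proof -
  have "(\<lambda>n. sig2 + c0 / real (MM n)) \<longlonglongrightarrow> sig2 + 0"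
    by (intro tendsto_add tendsto_const const_over_MM)
  moreover have "eventually (\<lambda>n. sig2 + c0 / real (MM n) = V n / real (MM n)) sequentially"
    using MM_ev[of "k"]
  proof eventually_elim
    case (elim n)
    then have "V n = real (MM n) * sig2 + c0" unfolding V_def by (intro D_affine) simp
    then show ?case using elim k1 by (simp add: field_simps)
  qed
  ultimately show ?thesis by (simp add: tendsto_cong)
qed

lemma Nn_MM:
  assumes p: "1 \<le> p"
  shows "(\<lambda>n. real (Nn p n) / real (MM n)) \<longlonglongrightarrow> 1 / real (Lb p)"
proof -
  have L: "0 < Lb p" using p k1 by (simp add: Lb_def)
  have z: "(\<lambda>n. real (MM n mod Lb p) / real (MM n) / real (Lb p)) \<longlonglongrightarrow> 0"
  proof (rule Lim_null_comparison)
    show "(\<lambda>n. real (Lb p) / real (MM n)) \<longlonglongrightarrow> 0" by (rule const_over_MM)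
    show "eventually (\<lambda>n. norm (real (MM n mod Lb p) / real (MM n) / real (Lb p)) \<le> real (Lb p) / real (MM n)) sequentially"
      using MM_ev[of 1]
    proof eventually_elim
      case (elim n)
      have a: "real (MM n mod Lb p) \<le> real (Lb p)" using L by simp
      have "MM n * 1 \<le> MM n * Lb p" using L by (intro mult_le_mono2) simp
      then have b: "real (MM n) \<le> real (MM n) * real (Lb p)" by (metis mult.right_neutral of_nat_le_iff of_nat_mult)
      have "real (MM n mod Lb p) / (real (MM n) * real (Lb p)) \<le> real (Lb p) / real (MM n)"
        by (rule frac_le) (use a b elim in auto)
      then show ?case by (simp add: divide_divide_eq_left)
    qed
  qed
  have "(\<lambda>n. 1 / real (Lb p) - real (MM n mod Lb p) / real (MM n) / real (Lb p)) \<longlonglongrightarrow> 1 / real (Lb p) - 0"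
    by (intro tendsto_diff tendsto_const z)
  moreover have "eventually (\<lambda>n. 1 / real (Lb p) - real (MM n mod Lb p) / real (MM n) / real (Lb p) = real (Nn p n) / real (MM n)) sequentially"
    using MM_ev[of 1]
  proof eventually_elim
    case (elim n)
    have "real (Nn p n) * real (Lb p) + real (MM n mod Lb p) = real (MM n)"
      unfolding Nn_def by (metis div_mult_mod_eq of_nat_add of_nat_mult)
    then have "real (Nn p n) = (real (MM n) - real (MM n mod Lb p)) / real (Lb p)"
      using L by (simp add: field_simps)
    then show ?case using elim L by (simp add: diff_divide_distrib)
  qed
  ultimately show ?thesis by (simp add: tendsto_cong)
qed

end




context runs begin

lemma ev_pos_affine:
  assumes "0 < s"
  shows "eventually (\<lambda>n. 0 < real n * s + c) sequentially"
proof -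
  obtain N :: nat where N: "\<bar>c\<bar> / s < N" using reals_Archimedean2 by blast
  show ?thesis unfolding eventually_sequentially
  proof (intro exI allI impI)
    fix n assume "N \<le> n"
    then have "\<bar>c\<bar> / s < real n" using N by linarith
    then have "\<bar>c\<bar> < real n * s" using assms by (simp add: divide_less_eq)
    then show "0 < real n * s + c" by linarith
  qed
qed

lemma ev_V_pos: "eventually (\<lambda>n. 0 < V n) sequentially"
proof -
  have "eventually (\<lambda>n. 0 < real (MM n) * sig2 + c0) sequentially"
    using filterlim_iff[THEN iffD1, OF MM_top, rule_format, OF ev_pos_affine[OF sig2_pos, of c0]] .
  then show ?thesis using MM_ev[of k]
    by eventually_elim (simp add: V_def D_affine)
qed

lemma ev_D_pos: "eventually (\<lambda>q. 0 < D (Suc q)) sequentially"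
proof -
  have "eventually (\<lambda>q. 0 < real (Suc q) * sig2 + c0) sequentially"
    using ev_pos_affine[OF sig2_pos, of c0] by (rule eventually_sequentially_Suc[THEN iffD2])
  moreover have "eventually (\<lambda>q. k - 1 \<le> Suc q) sequentially"
    unfolding eventually_sequentially by (intro exI[of _ k]) auto
  ultimately show ?thesis by eventually_elim (simp add: D_affine)
qed

lemma V_nonneg: "0 \<le> V n"
  using E_Tn_sq[of n] by (metis integral_nonneg_AE AE_I2 zero_le_power2)

lemma ratio_lim:
  assumes p: "1 \<le> p" and Dp: "0 < D p"
  shows "(\<lambda>n. V n / (real (Nn p n) * D p)) \<longlonglongrightarrow> real (Lb p) * sig2 / D p"
proof -
  have L: "0 < Lb p" using p k1 by (simp add: Lb_def)
  have lim: "(\<lambda>n. (V n / real (MM n)) / ((real (Nn p n) / real (MM n)) * D p)) \<longlonglongrightarrow> sig2 / ((1 / real (Lb p)) * D p)"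
    using L Dp by (intro tendsto_divide tendsto_mult tendsto_const V_MM Nn_MM p) auto
  have val: "sig2 / ((1 / real (Lb p)) * D p) = real (Lb p) * sig2 / D p" using L by (simp add: field_simps)
  have ev: "eventually (\<lambda>n. (V n / real (MM n)) / ((real (Nn p n) / real (MM n)) * D p) = V n / (real (Nn p n) * D p)) sequentially"
    using MM_ev[of 1] by eventually_elim (simp add: divide_simps)
  show ?thesis using Lim_transform_eventually[OF lim ev] unfolding val .
qed

lemma Nn_V_lim:
  assumes p: "1 \<le> p"
  shows "(\<lambda>n. real (Nn p n) / V n) \<longlonglongrightarrow> 1 / (real (Lb p) * sig2)"
proof -
  have L: "0 < Lb p" using p k1 by (simp add: Lb_def)
  have lim: "(\<lambda>n. (real (Nn p n) / real (MM n)) / (V n / real (MM n))) \<longlonglongrightarrow> (1 / real (Lb p)) / sig2"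
    using sig2_pos by (intro tendsto_divide V_MM Nn_MM p) auto
  have ev: "eventually (\<lambda>n. (real (Nn p n) / real (MM n)) / (V n / real (MM n)) = real (Nn p n) / V n) sequentially"
    using MM_ev[of 1] by eventually_elim (simp add: divide_simps)
  have val: "(1 / real (Lb p)) / sig2 = 1 / (real (Lb p) * sig2)" by simp
  show ?thesis using Lim_transform_eventually[OF lim ev] unfolding val .
qed

lemma inv_V_lim: "(\<lambda>n. a / V n) \<longlonglongrightarrow> 0"
proof -
  have lim: "(\<lambda>n. (a / real (MM n)) / (V n / real (MM n))) \<longlonglongrightarrow> 0 / sig2"
    using sig2_pos by (intro tendsto_divide V_MM const_over_MM) auto
  have ev: "eventually (\<lambda>n. (a / real (MM n)) / (V n / real (MM n)) = a / V n) sequentially"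
    using MM_ev[of 1] by eventually_elim (simp add: divide_simps)
  show ?thesis using Lim_transform_eventually[OF lim ev] by simp
qed

end




context runs begin

definition Xs :: "nat \<Rightarrow> (nat \<Rightarrow> real) \<Rightarrow> real" where
  "Xs n \<omega> = (Tn k n \<omega> - MM n * mu) / sqrt (V n)"
definition AA :: "nat \<Rightarrow> nat \<Rightarrow> (nat \<Rightarrow> real) \<Rightarrow> real" where
  "AA q n \<omega> = SA (Suc q) n \<omega> / sqrt (V n)"
definition BB :: "nat \<Rightarrow> nat \<Rightarrow> (nat \<Rightarrow> real) \<Rightarrow> real" where
  "BB q n \<omega> = SB (Suc q) n \<omega> / sqrt (V n)"
definition cpar :: "nat \<Rightarrow> real" where
  "cpar q = sqrt (real (Lb (Suc q)) * sig2 / D (Suc q))"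
definition epar :: "nat \<Rightarrow> real" where
  "epar q = real ((2 * k - 1) * (k - 1)) / (real (Suc q) * sig2) + 1 / real (Suc q)"

lemma XAB: "Xs n \<omega> = AA q n \<omega> + BB q n \<omega>"
  unfolding Xs_def AA_def BB_def Tn_cc using decomp[where p="Suc q"] by (simp add: add_divide_distrib)

lemma meas_SA: "SA p n \<in> borel_measurable Pm"
proof -
  have "(\<lambda>\<omega>. \<Sum>b<Nn p n. Z p b \<omega>) \<in> borel_measurable Pm" by (intro borel_measurable_sum meas_Z)
  then show ?thesis by (simp add: SA_def[abs_def])
qed

lemma meas_SB: "SB p n \<in> borel_measurable Pm"
proof -
  have "(\<lambda>\<omega>. \<Sum>i\<in>GG p n. cc i \<omega>) \<in> borel_measurable Pm" by (intro borel_measurable_sum meas_cc)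
  then show ?thesis by (simp add: SB_def[abs_def])
qed

lemma meas_AA: "AA q n \<in> borel_measurable Pm"
proof -
  have "(\<lambda>\<omega>. SA (Suc q) n \<omega> / sqrt (V n)) \<in> borel_measurable Pm"
    by (intro borel_measurable_divide borel_measurable_const meas_SA[unfolded SA_def[abs_def]]) (simp add: SA_def[abs_def] meas_SA[unfolded SA_def[abs_def]])
  then show ?thesis by (simp add: AA_def[abs_def])
qed

lemma meas_BB: "BB q n \<in> borel_measurable Pm"
proof -
  have m: "(\<lambda>\<omega>. SB (Suc q) n \<omega>) \<in> borel_measurable Pm" using meas_SB by simp
  have "(\<lambda>\<omega>. SB (Suc q) n \<omega> / sqrt (V n)) \<in> borel_measurable Pm"
    by (intro borel_measurable_divide borel_measurable_const m)
  then show ?thesis by (simp add: BB_def[abs_def])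
qed

lemma abs_SB: "\<bar>SB p n \<omega>\<bar> \<le> card (GG p n)"
proof -
  have "\<bar>SB p n \<omega>\<bar> \<le> (\<Sum>i\<in>GG p n. \<bar>cc i \<omega>\<bar>)" unfolding SB_def by (rule sum_abs)
  also have "\<dots> \<le> (\<Sum>i\<in>GG p n. 1)" by (intro sum_mono abs_cc)
  finally show ?thesis by simp
qed

lemma int_SB2: "integrable Pm (\<lambda>\<omega>. (SB p n \<omega>)\<^sup>2)"
proof (rule integrable_bounded_Pm[of _ "real (card (GG p n)) ^ 2"])
  show "(\<lambda>\<omega>. (SB p n \<omega>)\<^sup>2) \<in> borel_measurable Pm"
    using meas_SB[of p n] by (intro borel_measurable_power) simp
  show "\<bar>(SB p n \<omega>)\<^sup>2\<bar> \<le> real (card (GG p n)) ^ 2" for \<omega>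
    using power_mono[OF abs_SB[of p n \<omega>] abs_ge_zero, of 2] by simp
qed

lemma int_BB2: "integrable Pm (\<lambda>\<omega>. (BB q n \<omega>)\<^sup>2)"
proof -
  have "integrable Pm (\<lambda>\<omega>. (SB (Suc q) n \<omega>)\<^sup>2 / (sqrt (V n))\<^sup>2)"
    by (intro Bochner_Integration.integrable_divide_zero int_SB2)
  then show ?thesis unfolding BB_def by (simp add: power_divide)
qed

lemma E_BB2:
  assumes V: "0 < V n"
  shows "(\<integral>\<omega>. (BB q n \<omega>)\<^sup>2 \<partial>Pm) \<le> real (2 * k - 1) * (real (Nn (Suc q) n) * real (k - 1) + real (Lb (Suc q))) / V n"
proof -
  have "(\<integral>\<omega>. (BB q n \<omega>)\<^sup>2 \<partial>Pm) = (\<integral>\<omega>. (SB (Suc q) n \<omega>)\<^sup>2 \<partial>Pm) / V n"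
    unfolding BB_def using V by (simp add: power_divide)
  also have "(\<integral>\<omega>. (SB (Suc q) n \<omega>)\<^sup>2 \<partial>Pm) = Vs (GG (Suc q) n)"
    unfolding SB_def by (rule E_sq_sum) (simp add: GG_def, simp add: GG_def Rset_def)
  also have "Vs (GG (Suc q) n) \<le> (2 * k - 1) * card (GG (Suc q) n)"
    by (rule Vs_bound) (simp add: GG_def)
  also have "\<dots> = real (2 * k - 1) * real (card (GG (Suc q) n))" by simp
  also have "\<dots> \<le> real (2 * k - 1) * (real (Nn (Suc q) n) * real (k - 1) + real (Lb (Suc q)))"
    by (intro mult_left_mono card_GG) auto
  finally show ?thesis using V by (simp add: divide_right_mono)
qed

end




context runs begin

lemma scale_iff:
  fixes s a b y :: real
  assumes "0 < a" "0 < b"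
  shows "s / a \<le> y \<longleftrightarrow> s / b \<le> y * (a / b)"
  using assms by (simp add: pos_divide_le_eq mult.assoc)

lemma Aconv_q:
  assumes Dp: "0 < D (Suc q)"
  shows "(\<lambda>n. P.prob {\<omega>. AA q n \<omega> \<le> y}) \<longlonglongrightarrow> Phi (y * cpar q)"
proof -
  define p where "p = Suc q"
  have p: "1 \<le> p" by (simp add: p_def)
  have Dp': "0 < D p" using Dp by (simp add: p_def)
  define F where "F N y = P.prob {\<omega>. (\<Sum>b<N. Z p b \<omega>) / sqrt (real N * D p) \<le> y}" for N y
  define r where "r n = sqrt (V n / (real (Nn p n) * D p))" for n
  have Fc: "\<And>y. (\<lambda>N. F N y) \<longlonglongrightarrow> Phi y" unfolding F_def by (rule block_cdf[OF p Dp'])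
  have Fm: "F N a \<le> F N b" if "a \<le> b" for N a b
  proof -
    have m: "(\<lambda>\<omega>. (\<Sum>b<N. Z p b \<omega>) / sqrt (real N * D p)) \<in> borel_measurable Pm"
      by (intro borel_measurable_divide borel_measurable_sum meas_Z borel_measurable_const)
    show ?thesis unfolding F_def
      by (rule P.finite_measure_mono) (use that sets_le_Pm[OF m, of b] in auto)
  qed
  have rl: "r \<longlonglongrightarrow> cpar q"
    unfolding r_def cpar_def p_def[symmetric] by (intro tendsto_real_sqrt ratio_lim p Dp')
  have conv: "(\<lambda>n. F (Nn p n) (y * r n)) \<longlonglongrightarrow> Phi (y * cpar q)"
    by (rule cdf_comp_conv[OF Fc Fm Nn_top[OF p] rl])
  have ev: "eventually (\<lambda>n. F (Nn p n) (y * r n) = P.prob {\<omega>. AA q n \<omega> \<le> y}) sequentially"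
    using ev_V_pos Nn_top[OF p, unfolded filterlim_at_top, rule_format, of 1]
  proof eventually_elim
    case (elim n)
    have a: "0 < sqrt (V n)" using elim by simp
    have b: "0 < sqrt (real (Nn p n) * D p)" using elim Dp' by simp
    have rr: "r n = sqrt (V n) / sqrt (real (Nn p n) * D p)" unfolding r_def by (simp add: real_sqrt_divide)
    have "{\<omega>. AA q n \<omega> \<le> y} = {\<omega>. (\<Sum>b<Nn p n. Z p b \<omega>) / sqrt (real (Nn p n) * D p) \<le> y * r n}"
      unfolding AA_def SA_def p_def[symmetric] rr using scale_iff[OF a b] by blast
    then show ?case unfolding F_def by simp
  qed
  show ?thesis by (rule Lim_transform_eventually[OF conv ev])
qed

lemma over_Suc: "(\<lambda>q. a / real (Suc q)) \<longlonglongrightarrow> 0"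
  using LIMSEQ_Suc[OF lim_const_over_n[of a]] by simp

lemma frac_s:
  fixes a b c d s :: real
  assumes s: "0 < s"
  shows "(a + b / s) / (c + d / s) = (a * s + b) / (c * s + d)"
proof -
  have 1: "a + b / s = (a * s + b) / s" using s by (simp add: field_simps)
  have 2: "c + d / s = (c * s + d) / s" using s by (simp add: field_simps)
  show ?thesis unfolding 1 2 using s by (simp add: divide_divide_eq_left divide_divide_eq_right)
qed

lemma cpar_lim: "cpar \<longlonglongrightarrow> 1"
proof -
  define R where "R q = real (Lb (Suc q)) * sig2 / D (Suc q)" for q
  have lim: "(\<lambda>q. (sig2 + real (k - 1) * sig2 / real (Suc q)) / (sig2 + c0 / real (Suc q))) \<longlonglongrightarrow> (sig2 + 0) / (sig2 + 0)"
    using sig2_pos by (intro tendsto_divide tendsto_add tendsto_const over_Suc) auto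
  have ev: "eventually (\<lambda>q. (sig2 + real (k - 1) * sig2 / real (Suc q)) / (sig2 + c0 / real (Suc q)) = R q) sequentially"
    unfolding eventually_sequentially
  proof (intro exI[of _ k] allI impI)
    fix q assume "k \<le> q"
    then have D: "D (Suc q) = real (Suc q) * sig2 + c0" by (intro D_affine) simp
    have L: "real (Lb (Suc q)) = real (Suc q) + real (k - 1)" using k1 by (simp add: Lb_def)
    show "(sig2 + real (k - 1) * sig2 / real (Suc q)) / (sig2 + c0 / real (Suc q)) = R q"
      unfolding R_def D L frac_s[OF of_nat_0_less_iff[THEN iffD2, OF zero_less_Suc]]
      by (simp add: algebra_simps)
  qed
  have "R \<longlonglongrightarrow> 1" using Lim_transform_eventually[OF lim ev] sig2_pos by simp
  then have "(\<lambda>q. sqrt (R q)) \<longlonglongrightarrow> sqrt 1" by (rule tendsto_real_sqrt)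
  then show ?thesis unfolding cpar_def R_def by simp
qed

lemma epar_lim: "epar \<longlonglongrightarrow> 0"
proof -
  have "(\<lambda>q. real ((2 * k - 1) * (k - 1)) / sig2 / real (Suc q) + 1 / real (Suc q)) \<longlonglongrightarrow> 0 + 0"
    by (intro tendsto_add over_Suc)
  then show ?thesis unfolding epar_def by (simp add: divide_divide_eq_left mult.commute)
qed

lemma Bbd_q: "eventually (\<lambda>n. (\<integral>\<omega>. (BB q n \<omega>)\<^sup>2 \<partial>Pm) \<le> epar q) sequentially"
proof -
  define p where "p = Suc q"
  have p: "1 \<le> p" by (simp add: p_def)
  have L: "real p \<le> real (Lb p)" using Lb_ge[of p] by simp
  define h where "h n = real (2 * k - 1) * (real (Nn p n) * real (k - 1) + real (Lb p)) / V n" for n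
  define l where "l = real (2 * k - 1) * real (k - 1) * (1 / (real (Lb p) * sig2)) + 0"
  have hl: "h \<longlonglongrightarrow> l"
  proof -
    have "(\<lambda>n. real (2 * k - 1) * real (k - 1) * (real (Nn p n) / V n) + real (2 * k - 1) * real (Lb p) / V n) \<longlonglongrightarrow> l"
      unfolding l_def by (intro tendsto_add tendsto_mult tendsto_const Nn_V_lim p inv_V_lim)
    moreover have "(\<lambda>n. real (2 * k - 1) * real (k - 1) * (real (Nn p n) / V n) + real (2 * k - 1) * real (Lb p) / V n) = h"
      unfolding h_def by (rule ext) (simp add: field_simps add_divide_distrib)
    ultimately show ?thesis by simp
  qed
  have "l < epar q"
  proof -
    have Lpos: "0 < real (Lb p)" using L p by linarith
    have "real (2 * k - 1) * real (k - 1) * (1 / (real (Lb p) * sig2)) \<le> real (2 * k - 1) * real (k - 1) * (1 / (real p * sig2))"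
      using sig2_pos p L Lpos by (intro mult_left_mono divide_left_mono mult_right_mono) auto
    also have "\<dots> = real (2 * k - 1) * real (k - 1) / (real p * sig2)" by simp
    finally have i: "real (2 * k - 1) * real (k - 1) * (1 / (real (Lb p) * sig2)) \<le> real (2 * k - 1) * real (k - 1) / (real p * sig2)" .
    have j: "0 < 1 / real p" using p by simp
    show ?thesis using i j unfolding l_def epar_def p_def[symmetric] of_nat_mult by linarith
  qed
  then have "eventually (\<lambda>n. h n < epar q) sequentially" using order_tendstoD(2)[OF hl] by blast
  then show ?thesis using ev_V_pos
  proof eventually_elim
    case (elim n)
    then show ?case using E_BB2[of n q] unfolding h_def p_def by linarith
  qed
qed

theorem X_conv: "(\<lambda>n. P.prob {\<omega>. Xs n \<omega> \<le> x}) \<longlonglongrightarrow> Phi x"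
proof (rule approx_conv[where A=AA and B=BB and c=cpar and e=epar])
  show "Xs n \<omega> = AA p n \<omega> + BB p n \<omega>" for p n \<omega> by (rule XAB)
  show "AA p n \<in> borel_measurable Pm" for p n by (rule meas_AA)
  show "BB p n \<in> borel_measurable Pm" for p n by (rule meas_BB)
  show "integrable Pm (\<lambda>\<omega>. (BB p n \<omega>)\<^sup>2)" for p n by (rule int_BB2)
  show "eventually (\<lambda>p. \<forall>y. (\<lambda>n. P.prob {\<omega>. AA p n \<omega> \<le> y}) \<longlonglongrightarrow> Phi (y * cpar p)) sequentially"
    using ev_D_pos by eventually_elim (auto intro: Aconv_q)
  show "cpar \<longlonglongrightarrow> 1" by (rule cpar_lim)
  show "eventually (\<lambda>n. (\<integral>\<omega>. (BB p n \<omega>)\<^sup>2 \<partial>Pm) \<le> epar p) sequentially" for p by (rule Bbd_q)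
  show "epar \<longlonglongrightarrow> 0" by (rule epar_lim)
qed

end




context runs begin

lemma meas_Xs: "Xs n \<in> borel_measurable Pm"
proof -
  have "(\<lambda>\<omega>. (Tn k n \<omega> - MM n * mu) / sqrt (V n)) \<in> borel_measurable Pm"
    by (intro borel_measurable_divide borel_measurable_diff meas_Tn borel_measurable_const)
  then show ?thesis by (simp add: Xs_def[abs_def])
qed

lemma pmf_facts:
  fixes n :: nat
  defines "Q \<equiv> measure_pmf (unif_perm n)"
  shows "measure_pmf.expectation (unif_perm n) (Y k n) = MM n * mu"
    and "measure_pmf.variance (unif_perm n) (Y k n) = V n"
    and "distr Q borel (\<lambda>p. (Y k n p - MM n * mu) / sqrt (V n)) = distr Pm borel (Xs n)"
proof -
  have DT: "distr Pm borel (Tn k n) = distr Q borel (Y k n)"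
    unfolding Q_def by (rule distr_transfer[OF k1])
  have mY: "Y k n \<in> Q \<rightarrow>\<^sub>M borel" unfolding Q_def by simp
  have mT: "Tn k n \<in> Pm \<rightarrow>\<^sub>M borel" using meas_Tn by simp
  have gen: "(\<integral>p. f (Y k n p) \<partial>Q) = (\<integral>\<omega>. f (Tn k n \<omega>) \<partial>Pm)" if f: "f \<in> borel_measurable borel" for f :: "real \<Rightarrow> real"
  proof -
    have "(\<integral>p. f (Y k n p) \<partial>Q) = (\<integral>x. f x \<partial>(distr Q borel (Y k n)))"
      by (rule integral_distr[OF mY f, symmetric])
    also have "\<dots> = (\<integral>x. f x \<partial>(distr Pm borel (Tn k n)))" by (simp add: DT)
    also have "\<dots> = (\<integral>\<omega>. f (Tn k n \<omega>) \<partial>Pm)" by (rule integral_distr[OF mT f])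
    finally show ?thesis .
  qed
  have E: "(\<integral>p. Y k n p \<partial>Q) = MM n * mu"
    using gen[of "\<lambda>x. x"] E_Tn by simp
  then show "measure_pmf.expectation (unif_perm n) (Y k n) = MM n * mu" unfolding Q_def .
  have "(\<integral>p. (Y k n p - MM n * mu)\<^sup>2 \<partial>Q) = V n"
    using gen[of "\<lambda>x. (x - MM n * mu)\<^sup>2"] E_Tn_sq by simp
  then show "measure_pmf.variance (unif_perm n) (Y k n) = V n"
    using E unfolding Q_def by simp
  have g: "(\<lambda>x. (x - MM n * mu) / sqrt (V n)) \<in> borel \<rightarrow>\<^sub>M borel" by simp
  have "distr Q borel (\<lambda>p. (Y k n p - MM n * mu) / sqrt (V n))
      = distr (distr Q borel (Y k n)) borel (\<lambda>x. (x - MM n * mu) / sqrt (V n))"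
    by (subst distr_distr[OF g mY]) (simp add: comp_def)
  also have "\<dots> = distr (distr Pm borel (Tn k n)) borel (\<lambda>x. (x - MM n * mu) / sqrt (V n))"
    by (simp add: DT)
  also have "\<dots> = distr Pm borel (Xs n)"
    by (subst distr_distr[OF g mT]) (simp add: comp_def Xs_def[abs_def])
  finally show "distr Q borel (\<lambda>p. (Y k n p - MM n * mu) / sqrt (V n)) = distr Pm borel (Xs n)" .
qed

theorem main_result:
  "weak_conv_m
     (\<lambda>n. distr (measure_pmf (unif_perm n)) borel
        (\<lambda>p. (Y k n p - measure_pmf.expectation (unif_perm n) (Y k n))
              / sqrt (measure_pmf.variance (unif_perm n) (Y k n))))
     std_normal_distribution"
  unfolding weak_conv_m_def weak_conv_def
proof (intro allI impI)
  fix x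
  have "cdf (distr (measure_pmf (unif_perm n)) borel
        (\<lambda>p. (Y k n p - measure_pmf.expectation (unif_perm n) (Y k n))
              / sqrt (measure_pmf.variance (unif_perm n) (Y k n)))) x = P.prob {\<omega>. Xs n \<omega> \<le> x}" for n
  proof -
    have "cdf (distr Pm borel (Xs n)) x = P.prob {\<omega>. Xs n \<omega> \<le> x}"
      unfolding cdf_def by (subst measure_distr[OF meas_Xs]) (auto simp: vimage_def space_Pm)
    then show ?thesis unfolding pmf_facts(2) unfolding pmf_facts(1) pmf_facts(3) .
  qed
  then show "(\<lambda>n. cdf (distr (measure_pmf (unif_perm n)) borel
        (\<lambda>p. (Y k n p - measure_pmf.expectation (unif_perm n) (Y k n))
              / sqrt (measure_pmf.variance (unif_perm n) (Y k n)))) x) \<longlonglongrightarrow> cdf std_normal_distribution x"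
    using X_conv[of x] unfolding Phi_def by simp
qed

end

theorem mainTheorem4:
  fixes k :: nat
  assumes "k \<ge> 2"
  shows "weak_conv_m
     (\<lambda>n. distr (measure_pmf (unif_perm n)) borel
        (\<lambda>p. (Y k n p - measure_pmf.expectation (unif_perm n) (Y k n))
              / sqrt (measure_pmf.variance (unif_perm n) (Y k n))))
     std_normal_distribution"
proof -
  interpret runs k using assms by unfold_locales
  show ?thesis by (rule main_result)
qed


end
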